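(* Let $\mathbb K$ be a field of prime characteristic $p$, $T=\mathbb K[x_1,\dots,x_n]$, $e\ge1$, and $A\subseteq T$ an ideal. (i) For any multiplicative set $W\subseteq T$, $\widetilde{W^{-1}A}^{e}=W^{-1}\widetilde{A}^{e}$ (the left side computed in $W^{-1}T$). (ii) If $\widehat T=\mathbb K[[x_1,\dots,x_n]]$ is the completion of $T$ at $(x_1,\dots,x_n)$, then $\widetilde{A\widehat T}^{e}=\widetilde{A}^{e}\widehat T$ (the left side computed in $\widehat T$).
   Context: In a ring $U$ of characteristic $p$, for an ideal $L$, $L^{[p^e]}$ is the ideal generated by $\{a^{p^e}:a\in L\}$, and for an ideal $A$, $\widetilde{A}^{e}$ is the intersection of all ideals $L\subseteq U$ with $A\subseteq L^{[p^e]}$. *)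

theory Defs
  imports "HOL-Algebra.Algebra" "HOL-Library.Poly_Mapping"
begin

definition frob_bracket :: "('a, 'b) ring_scheme \<Rightarrow> nat \<Rightarrow> 'a set \<Rightarrow> 'a set" where
  "frob_bracket U q L = genideal U ((\<lambda>a. a [^]\<^bsub>U\<^esub> q) ` L)"

definition ideal_tilde :: "('a, 'b) ring_scheme \<Rightarrow> nat \<Rightarrow> nat \<Rightarrow> 'a set \<Rightarrow> 'a set" where
  "ideal_tilde U p e A = \<Inter> {L. ideal L U \<and> A \<subseteq> frob_bracket U (p ^ e) L}"

definition ext_ideal :: "('b, 'c) ring_scheme \<Rightarrow> ('a \<Rightarrow> 'b) \<Rightarrow> 'a set \<Rightarrow> 'b set" where
  "ext_ideal S f I = genideal S (f ` I)"

text \<open>Polynomials in the variables indexed by nat, with exponent vectors as finitely supported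
  functions; K[x_0,...,x_{n-1}] is the subring of polynomials only involving variables < n.\<close>
definition mpoly_ring :: "nat \<Rightarrow> ((nat \<Rightarrow>\<^sub>0 nat) \<Rightarrow>\<^sub>0 'k::field) ring" where
  "mpoly_ring n = \<lparr>carrier = {P :: (nat \<Rightarrow>\<^sub>0 nat) \<Rightarrow>\<^sub>0 'k. \<forall>m\<in>Poly_Mapping.keys P. Poly_Mapping.keys m \<subseteq> {..<n}},
                   monoid.mult = (*), one = 1, ring.zero = 0, ring.add = (+)\<rparr>"

definition ps_mult :: "((nat \<Rightarrow>\<^sub>0 nat) \<Rightarrow> 'k::field) \<Rightarrow> ((nat \<Rightarrow>\<^sub>0 nat) \<Rightarrow> 'k) \<Rightarrow> ((nat \<Rightarrow>\<^sub>0 nat) \<Rightarrow> 'k)" where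
  "ps_mult f g = (\<lambda>m. \<Sum>(a, b) \<in> {(a, b). a + b = m}. f a * g b)"

definition ps_ring :: "nat \<Rightarrow> ((nat \<Rightarrow>\<^sub>0 nat) \<Rightarrow> 'k::field) ring" where
  "ps_ring n = \<lparr>carrier = {f. \<forall>m. \<not> Poly_Mapping.keys m \<subseteq> {..<n} \<longrightarrow> f m = 0},
                 monoid.mult = ps_mult, one = (\<lambda>m. if m = 0 then 1 else 0),
                 ring.zero = (\<lambda>_. 0), ring.add = (\<lambda>f g m. f m + g m)\<rparr>"

definition mpoly_to_ps :: "((nat \<Rightarrow>\<^sub>0 nat) \<Rightarrow>\<^sub>0 'k::field) \<Rightarrow> ((nat \<Rightarrow>\<^sub>0 nat) \<Rightarrow> 'k)" where
  "mpoly_to_ps P = Poly_Mapping.lookup P"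

definition loc_rel :: "('a, 'b) ring_scheme \<Rightarrow> 'a set \<Rightarrow> (('a \<times> 'a) \<times> ('a \<times> 'a)) set" where
  "loc_rel R W = {((a, s), (b, t)). a \<in> carrier R \<and> s \<in> W \<and> b \<in> carrier R \<and> t \<in> W \<and>
                   (\<exists>u\<in>W. u \<otimes>\<^bsub>R\<^esub> (t \<otimes>\<^bsub>R\<^esub> a \<ominus>\<^bsub>R\<^esub> s \<otimes>\<^bsub>R\<^esub> b) = \<zero>\<^bsub>R\<^esub>)}"

definition loc_frac :: "('a, 'b) ring_scheme \<Rightarrow> 'a set \<Rightarrow> 'a \<Rightarrow> 'a \<Rightarrow> ('a \<times> 'a) set" where
  "loc_frac R W a s = loc_rel R W `` {(a, s)}"

definition loc :: "('a, 'b) ring_scheme \<Rightarrow> 'a set \<Rightarrow> (('a \<times> 'a) set) ring" where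
  "loc R W = \<lparr>carrier = (carrier R \<times> W) // loc_rel R W,
     monoid.mult = (\<lambda>F G. loc_frac R W (fst (SOME x. x \<in> F) \<otimes>\<^bsub>R\<^esub> fst (SOME y. y \<in> G))
                                       (snd (SOME x. x \<in> F) \<otimes>\<^bsub>R\<^esub> snd (SOME y. y \<in> G))),
     one = loc_frac R W \<one>\<^bsub>R\<^esub> \<one>\<^bsub>R\<^esub>,
     ring.zero = loc_frac R W \<zero>\<^bsub>R\<^esub> \<one>\<^bsub>R\<^esub>,
     ring.add = (\<lambda>F G. loc_frac R W
        (fst (SOME x. x \<in> F) \<otimes>\<^bsub>R\<^esub> snd (SOME y. y \<in> G) \<oplus>\<^bsub>R\<^esub> fst (SOME y. y \<in> G) \<otimes>\<^bsub>R\<^esub> snd (SOME x. x \<in> F))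
        (snd (SOME x. x \<in> F) \<otimes>\<^bsub>R\<^esub> snd (SOME y. y \<in> G)))\<rparr>"

definition loc_map :: "('a, 'b) ring_scheme \<Rightarrow> 'a set \<Rightarrow> 'a \<Rightarrow> ('a \<times> 'a) set" where
  "loc_map R W a = loc_frac R W a \<one>\<^bsub>R\<^esub>"

definition multiplicative_set :: "('a, 'b) ring_scheme \<Rightarrow> 'a set \<Rightarrow> bool" where
  "multiplicative_set R W \<longleftrightarrow> W \<subseteq> carrier R \<and> \<one>\<^bsub>R\<^esub> \<in> W \<and>
     (\<forall>s\<in>W. \<forall>t\<in>W. s \<otimes>\<^bsub>R\<^esub> t \<in> W)"

end

theory Submission
  imports Defs
begin

lemma (in cring) frob_split_mem:
  assumes L: "ideal L R" and q: "0 < q"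
    and pc: "\<And>x. x \<in> carrier R \<Longrightarrow> \<pi> x \<in> carrier R"
    and padd: "\<And>x y. x \<in> carrier R \<Longrightarrow> y \<in> carrier R \<Longrightarrow> \<pi> (x \<oplus> y) = \<pi> x \<oplus> \<pi> y"
    and plin: "\<And>h c. h \<in> carrier R \<Longrightarrow> c \<in> carrier R \<Longrightarrow> \<pi> (h [^] q \<otimes> c) = h \<otimes> \<pi> c"
    and x: "x \<in> frob_bracket R q L"
  shows "\<pi> x \<in> L"
proof -
  interpret L: ideal L R by fact
  have p0: "\<pi> \<zero> = \<zero>"
  proof -
    have "\<zero> [^] q \<otimes> \<one> = \<zero>" using q by (simp add: nat_pow_zero)
    hence "\<pi> \<zero> = \<pi> (\<zero> [^] q \<otimes> \<one>)" by simp
    also have "\<dots> = \<zero> \<otimes> \<pi> \<one>" by (rule plin) auto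
    finally show ?thesis using pc[of \<one>] by simp
  qed
  define J where "J = {x \<in> carrier R. \<forall>r\<in>carrier R. \<pi> (r \<otimes> x) \<in> L}"
  have J: "ideal J R"
  proof (rule idealI)
    show "ring R" by (rule ring_axioms)
    show "subgroup J (add_monoid R)"
    proof (rule add.subgroupI)
      show "J \<subseteq> carrier R" unfolding J_def by auto
      show "J \<noteq> {}" unfolding J_def using p0 by (auto intro!: exI[of _ \<zero>])
      fix a b assume a: "a \<in> J" and b: "b \<in> J"
      show "\<ominus> a \<in> J" unfolding J_def
        proof (safe)
          show "\<ominus> a \<in> carrier R" using a unfolding J_def by auto
          fix r assume r: "r \<in> carrier R"
          have "r \<otimes> \<ominus> a = (\<ominus> r) \<otimes> a" using a r unfolding J_def by (simp add: r_minus l_minus)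
          thus "\<pi> (r \<otimes> \<ominus> a) \<in> L" using a r unfolding J_def by auto
        qed
      show "a \<oplus> b \<in> J"
        using a b unfolding J_def by (auto simp: r_distr padd L.a_closed)
    qed
    fix a x assume a: "a \<in> J" and x: "x \<in> carrier R"
    have xa: "x \<otimes> a \<in> J" unfolding J_def
    proof safe
      show "x \<otimes> a \<in> carrier R" using a x unfolding J_def by auto
      fix r assume r: "r \<in> carrier R"
      have "r \<otimes> (x \<otimes> a) = (r \<otimes> x) \<otimes> a" using a x r unfolding J_def by (simp add: m_assoc)
      thus "\<pi> (r \<otimes> (x \<otimes> a)) \<in> L" using a x r unfolding J_def by auto
    qed
    thus "x \<otimes> a \<in> J" .
    show "a \<otimes> x \<in> J" using xa a x unfolding J_def by (metis (no_types, lifting) mem_Collect_eq m_comm)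
  qed
  have "(\<lambda>a. a [^] q) ` L \<subseteq> J"
  proof
    fix y assume "y \<in> (\<lambda>a. a [^] q) ` L"
    then obtain g where g: "g \<in> L" "y = g [^] q" by auto
    have gc: "g \<in> carrier R" using g L.I_l_closed[of g \<one>] by simp
    show "y \<in> J" unfolding J_def using g gc
      by (auto simp: m_comm[of _ "g [^] q"] plin pc L.I_r_closed)
  qed
  hence "frob_bracket R q L \<subseteq> J"
    unfolding frob_bracket_def by (rule genideal_minimal[OF J])
  with x have "x \<in> J" by auto
  thus ?thesis unfolding J_def by (metis (no_types, lifting) mem_Collect_eq one_closed l_one)
qed

lemma frob_bracket_ideal:
  assumes "ring R" "L \<subseteq> carrier R"
  shows "ideal (frob_bracket R q L) R"
  unfolding frob_bracket_def
  by (rule ring.genideal_ideal[OF assms(1)]) (use assms in \<open>auto intro: monoid.nat_pow_closed ring.is_monoid\<close>)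

lemma frob_bracket_mono:
  assumes "ring R" "L \<subseteq> carrier R" "M \<subseteq> carrier R" "L \<subseteq> M"
  shows "frob_bracket R q L \<subseteq> frob_bracket R q M"
proof -
  interpret ring R by fact
  have "(\<lambda>a. a [^]\<^bsub>R\<^esub> q) ` M \<subseteq> carrier R" using assms(3) by auto
  hence "(\<lambda>a. a [^]\<^bsub>R\<^esub> q) ` M \<subseteq> frob_bracket R q M"
    using genideal_self unfolding frob_bracket_def by auto
  hence "(\<lambda>a. a [^]\<^bsub>R\<^esub> q) ` L \<subseteq> frob_bracket R q M"
    using assms(4) by blast
  thus ?thesis unfolding frob_bracket_def
    by (intro genideal_minimal) (use frob_bracket_ideal[OF assms(1) assms(3), of q] in \<open>auto simp: frob_bracket_def\<close>)
qed

lemma hom_frob_bracket: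
  assumes R: "ring R" and S: "ring S" and hom: "\<phi> \<in> ring_hom R S"
    and G: "G \<subseteq> carrier R" and E: "ideal E S" and GE: "\<phi> ` G \<subseteq> E"
  shows "\<phi> ` frob_bracket R q G \<subseteq> frob_bracket S q E"
proof -
  interpret ring_hom_ring R S \<phi> using R S hom by (simp add: ring_hom_ringI2)
  interpret E: ideal E S by fact
  have Ec: "E \<subseteq> carrier S" using E.a_subset .
  let ?V = "{r \<in> carrier R. \<phi> r \<in> frob_bracket S q E}"
  have V: "ideal ?V R" by (rule ideal_vimage[OF frob_bracket_ideal[OF S Ec]])
  have "(\<lambda>a. a [^]\<^bsub>R\<^esub> q) ` G \<subseteq> ?V"
  proof
    fix y assume "y \<in> (\<lambda>a. a [^]\<^bsub>R\<^esub> q) ` G"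
    then obtain g where g: "g \<in> G" "y = g [^]\<^bsub>R\<^esub> q" by auto
    have "\<phi> y = \<phi> g [^]\<^bsub>S\<^esub> q" using g G hom_nat_pow[of g q] by auto
    moreover have "\<phi> g [^]\<^bsub>S\<^esub> q \<in> frob_bracket S q E"
      unfolding frob_bracket_def using g GE S.genideal_self[of "(\<lambda>a. a [^]\<^bsub>S\<^esub> q) ` E"] Ec by auto
    ultimately show "y \<in> ?V" using g G by auto
  qed
  hence "frob_bracket R q G \<subseteq> ?V" unfolding frob_bracket_def using V[unfolded frob_bracket_def] by (intro R.genideal_minimal)
  thus ?thesis by auto
qed

theorem tilde_transfer:
  fixes R :: "('a,'c) ring_scheme" and S :: "('b,'d) ring_scheme" and \<phi> :: "'a \<Rightarrow> 'b"
    and \<pi> :: "'i \<Rightarrow> 'a \<Rightarrow> 'a" and \<pi>' :: "'i \<Rightarrow> 'b \<Rightarrow> 'b"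
  assumes R: "cring R" and S: "cring S" and hom: "\<phi> \<in> ring_hom R S"
    and A: "A \<subseteq> carrier R" and q: "0 < p ^ e"
    and Rc: "\<And>i x. i \<in> I \<Longrightarrow> x \<in> carrier R \<Longrightarrow> \<pi> i x \<in> carrier R"
    and Radd: "\<And>i x y. i \<in> I \<Longrightarrow> x \<in> carrier R \<Longrightarrow> y \<in> carrier R \<Longrightarrow> \<pi> i (x \<oplus>\<^bsub>R\<^esub> y) = \<pi> i x \<oplus>\<^bsub>R\<^esub> \<pi> i y"
    and Rlin: "\<And>i h c. i \<in> I \<Longrightarrow> h \<in> carrier R \<Longrightarrow> c \<in> carrier R \<Longrightarrow> \<pi> i (h [^]\<^bsub>R\<^esub> (p ^ e) \<otimes>\<^bsub>R\<^esub> c) = h \<otimes>\<^bsub>R\<^esub> \<pi> i c"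
    and R2: "\<And>a. a \<in> carrier R \<Longrightarrow> a \<in> frob_bracket R (p ^ e) ((\<lambda>i. \<pi> i a) ` I)"
    and Sc: "\<And>i x. i \<in> I \<Longrightarrow> x \<in> carrier S \<Longrightarrow> \<pi>' i x \<in> carrier S"
    and Sadd: "\<And>i x y. i \<in> I \<Longrightarrow> x \<in> carrier S \<Longrightarrow> y \<in> carrier S \<Longrightarrow> \<pi>' i (x \<oplus>\<^bsub>S\<^esub> y) = \<pi>' i x \<oplus>\<^bsub>S\<^esub> \<pi>' i y"
    and Slin: "\<And>i h c. i \<in> I \<Longrightarrow> h \<in> carrier S \<Longrightarrow> c \<in> carrier S \<Longrightarrow> \<pi>' i (h [^]\<^bsub>S\<^esub> (p ^ e) \<otimes>\<^bsub>S\<^esub> c) = h \<otimes>\<^bsub>S\<^esub> \<pi>' i c"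
    and C: "\<And>i a. i \<in> I \<Longrightarrow> a \<in> carrier R \<Longrightarrow> \<pi>' i (\<phi> a) = \<phi> (\<pi> i a)"
  shows "ideal_tilde S p e (ext_ideal S \<phi> A) = ext_ideal S \<phi> (ideal_tilde R p e A)"
proof -
  obtain q where q_def: "q = p ^ e" by blast
  interpret R: cring R by fact
  interpret S: cring S by fact
  define Xs where "Xs = {\<pi> i a | i a. i \<in> I \<and> a \<in> A}"
  interpret ring_hom_ring R S \<phi> using R.ring_axioms S.ring_axioms hom by (simp add: ring_hom_ringI2)
  define G where "G = genideal R Xs"
  have Xc: "Xs \<subseteq> carrier R" using A Rc unfolding Xs_def by auto
  have Gi: "ideal G R" unfolding G_def by (rule R.genideal_ideal[OF Xc])
  have Gc: "G \<subseteq> carrier R" using Gi by (simp add: ideal.axioms(1) additive_subgroup.a_subset)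
  have AG: "A \<subseteq> frob_bracket R q G"
  proof
    fix a assume a: "a \<in> A"
    have sub: "(\<lambda>i. \<pi> i a) ` I \<subseteq> G" using a R.genideal_self[OF Xc] unfolding G_def Xs_def by auto
    have "a \<in> frob_bracket R q ((\<lambda>i. \<pi> i a) ` I)" using R2 a A unfolding q_def by auto
    also have "\<dots> \<subseteq> frob_bracket R q G"
      by (rule frob_bracket_mono[OF R.ring_axioms]) (use sub Gc in auto)
    finally show "a \<in> frob_bracket R q G" .
  qed
  have GL: "G \<subseteq> L" if L: "ideal L R" and AL: "A \<subseteq> frob_bracket R q L" for L
    unfolding G_def
  proof (rule R.genideal_minimal[OF L])
    show "Xs \<subseteq> L"
    proof
      fix x assume "x \<in> Xs"
      then obtain i a where x: "x = \<pi> i a" "i \<in> I" "a \<in> A" unfolding Xs_def by auto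
      show "x \<in> L" unfolding x(1)
        by (rule R.frob_split_mem[OF L q, of "\<pi> i"]) (use x AL Rc Radd Rlin in \<open>auto simp: q_def\<close>)
    qed
  qed
  have tR: "ideal_tilde R p e A = G"
    unfolding ideal_tilde_def q_def[symmetric]
  proof
    show "\<Inter> {L. ideal L R \<and> A \<subseteq> frob_bracket R q L} \<subseteq> G" using Gi AG by auto
    show "G \<subseteq> \<Inter> {L. ideal L R \<and> A \<subseteq> frob_bracket R q L}" using GL by auto
  qed
  define E where "E = genideal S (\<phi> ` G)"
  have phiG: "\<phi> ` G \<subseteq> carrier S" using Gc by auto
  have Ei: "ideal E S" unfolding E_def by (rule S.genideal_ideal[OF phiG])
  have Ec: "E \<subseteq> carrier S" using Ei by (simp add: ideal.axioms(1) additive_subgroup.a_subset)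
  have phiA: "\<phi> ` A \<subseteq> carrier S" using A by auto
  have AE: "ext_ideal S \<phi> A \<subseteq> frob_bracket S q E"
    unfolding ext_ideal_def
  proof (rule S.genideal_minimal[OF frob_bracket_ideal[OF S.ring_axioms Ec]])
    have "\<phi> ` frob_bracket R q G \<subseteq> frob_bracket S q E"
      by (rule hom_frob_bracket[OF R.ring_axioms S.ring_axioms hom Gc Ei])
         (use S.genideal_self[OF phiG] in \<open>auto simp: E_def\<close>)
    thus "\<phi> ` A \<subseteq> frob_bracket S q E" using AG by auto
  qed
  have EL: "E \<subseteq> L" if L: "ideal L S" and AL: "ext_ideal S \<phi> A \<subseteq> frob_bracket S q L" for L
    unfolding E_def
  proof (rule S.genideal_minimal[OF L])
    let ?V = "{r \<in> carrier R. \<phi> r \<in> L}"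
    have V: "ideal ?V R" by (rule ideal_vimage[OF L])
    have "Xs \<subseteq> ?V"
    proof
      fix x assume "x \<in> Xs"
      then obtain i a where x: "x = \<pi> i a" "i \<in> I" "a \<in> A" unfolding Xs_def by auto
      have ac: "a \<in> carrier R" using x A by auto
      have "\<phi> a \<in> ext_ideal S \<phi> A" unfolding ext_ideal_def using S.genideal_self[OF phiA] x by auto
      hence "\<phi> a \<in> frob_bracket S q L" using AL by auto
      hence "\<pi>' i (\<phi> a) \<in> L"
        by (intro S.frob_split_mem[OF L q, of "\<pi>' i"]) (use x Sc Sadd Slin in \<open>auto simp: q_def\<close>)
      thus "x \<in> ?V" using C[OF x(2) ac] x Rc[OF x(2) ac] by auto
    qed
    hence "G \<subseteq> ?V" unfolding G_def by (rule R.genideal_minimal[OF V])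
    thus "\<phi> ` G \<subseteq> L" by auto
  qed
  have "ideal_tilde S p e (ext_ideal S \<phi> A) = E"
    unfolding ideal_tilde_def q_def[symmetric]
  proof
    show "\<Inter> {L. ideal L S \<and> ext_ideal S \<phi> A \<subseteq> frob_bracket S q L} \<subseteq> E" using Ei AE by auto
    show "E \<subseteq> \<Inter> {L. ideal L S \<and> ext_ideal S \<phi> A \<subseteq> frob_bracket S q L}" using EL by auto
  qed
  thus ?thesis using tR by (simp add: E_def ext_ideal_def)
qed

lemma (in ring) diff0_iff: "x \<in> carrier R \<Longrightarrow> y \<in> carrier R \<Longrightarrow> (x \<ominus> y = \<zero>) = (x = y)"
proof
  assume x: "x \<in> carrier R" and y: "y \<in> carrier R" and d: "x \<ominus> y = \<zero>"
  have "x = x \<oplus> (\<ominus> y \<oplus> y)" using x y by (simp add: l_neg)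
  also have "\<dots> = (x \<ominus> y) \<oplus> y" using x y by (simp add: minus_eq a_assoc)
  finally show "x = y" using d y by simp
next
  assume "x \<in> carrier R" "y \<in> carrier R" "x = y"
  thus "x \<ominus> y = \<zero>" by (simp add: minus_eq r_neg)
qed

lemma (in ring) r_diff_distr': "u \<in> carrier R \<Longrightarrow> x \<in> carrier R \<Longrightarrow> y \<in> carrier R \<Longrightarrow>
  u \<otimes> (x \<ominus> y) = u \<otimes> x \<ominus> u \<otimes> y"
  by (simp add: minus_eq r_distr r_minus)

locale locW = cring R for R (structure) +
  fixes W assumes msW: "multiplicative_set R W"
begin

lemma W_sub: "W \<subseteq> carrier R" and W_one: "\<one> \<in> W" and W_mult: "s \<in> W \<Longrightarrow> t \<in> W \<Longrightarrow> s \<otimes> t \<in> W"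
  using msW unfolding multiplicative_set_def by auto

lemma W_c: "s \<in> W \<Longrightarrow> s \<in> carrier R" using W_sub by auto

lemma rel_iff: "((a, s), (b, t)) \<in> loc_rel R W \<longleftrightarrow>
   a \<in> carrier R \<and> s \<in> W \<and> b \<in> carrier R \<and> t \<in> W \<and> (\<exists>u\<in>W. u \<otimes> (t \<otimes> a) = u \<otimes> (s \<otimes> b))"
proof -
  have "u \<otimes> (t \<otimes> a \<ominus> s \<otimes> b) = \<zero> \<longleftrightarrow> u \<otimes> (t \<otimes> a) = u \<otimes> (s \<otimes> b)"
    if "a \<in> carrier R" "s \<in> W" "b \<in> carrier R" "t \<in> W" "u \<in> W" for u
    using that W_c by (simp add: r_diff_distr' diff0_iff)
  thus ?thesis unfolding loc_rel_def by auto
qed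

lemma equiv_rel: "equiv (carrier R \<times> W) (loc_rel R W)"
proof (rule equivI)
  show "loc_rel R W \<subseteq> (carrier R \<times> W) \<times> (carrier R \<times> W)" by (auto simp: loc_rel_def)
  show "refl_on (carrier R \<times> W) (loc_rel R W)"
    unfolding refl_on_def
  proof safe
    fix a s assume "a \<in> carrier R" "s \<in> W"
    thus "((a, s), (a, s)) \<in> loc_rel R W" using W_one W_c by (auto simp: rel_iff)
  qed
  show "sym (loc_rel R W)"
    unfolding sym_def by (auto simp: rel_iff) (metis)
  show "trans (loc_rel R W)"
    unfolding trans_def
  proof safe
    fix a s b t c r
    assume 1: "((a, s), (b, t)) \<in> loc_rel R W" and 2: "((b, t), (c, r)) \<in> loc_rel R W"
    then obtain u v where u: "u \<in> W" "u \<otimes> (t \<otimes> a) = u \<otimes> (s \<otimes> b)"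
      and v: "v \<in> W" "v \<otimes> (r \<otimes> b) = v \<otimes> (t \<otimes> c)"
      and c: "a \<in> carrier R" "s \<in> W" "b \<in> carrier R" "t \<in> W" "c \<in> carrier R" "r \<in> W"
      by (auto simp: rel_iff)
    note cc = c W_c[OF c(2)] W_c[OF c(4)] W_c[OF c(6)] W_c[OF u(1)] W_c[OF v(1)]
    have "(u \<otimes> v \<otimes> t) \<otimes> (r \<otimes> a) = (v \<otimes> r) \<otimes> (u \<otimes> (t \<otimes> a))"
      using cc by (simp add: m_ac)
    also have "\<dots> = (v \<otimes> r) \<otimes> (u \<otimes> (s \<otimes> b))" using u by simp
    also have "\<dots> = (u \<otimes> s) \<otimes> (v \<otimes> (r \<otimes> b))" using cc by (simp add: m_ac)
    also have "\<dots> = (u \<otimes> s) \<otimes> (v \<otimes> (t \<otimes> c))" using v by simp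
    also have "\<dots> = (u \<otimes> v \<otimes> t) \<otimes> (s \<otimes> c)" using cc by (simp add: m_ac)
    finally show "((a, s), (c, r)) \<in> loc_rel R W"
      using c u v W_mult by (auto simp: rel_iff intro!: bexI[of _ "u \<otimes> v \<otimes> t"])
  qed
qed

lemma rel_refl: "a \<in> carrier R \<Longrightarrow> s \<in> W \<Longrightarrow> ((a, s), (a, s)) \<in> loc_rel R W"
  using equiv_rel by (auto dest: equiv_class_self simp: equiv_def refl_on_def)

lemma frac_in: "a \<in> carrier R \<Longrightarrow> s \<in> W \<Longrightarrow> loc_frac R W a s \<in> carrier (loc R W)"
  unfolding loc_def loc_frac_def by (auto intro: quotientI)

lemma frac_eq: "a \<in> carrier R \<Longrightarrow> s \<in> W \<Longrightarrow> b \<in> carrier R \<Longrightarrow> t \<in> W \<Longrightarrow>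
   loc_frac R W a s = loc_frac R W b t \<longleftrightarrow> ((a, s), (b, t)) \<in> loc_rel R W"
  unfolding loc_frac_def by (rule eq_equiv_class_iff[OF equiv_rel]) auto

lemma frac_eqI: "a \<in> carrier R \<Longrightarrow> s \<in> W \<Longrightarrow> b \<in> carrier R \<Longrightarrow> t \<in> W \<Longrightarrow>
   t \<otimes> a = s \<otimes> b \<Longrightarrow> loc_frac R W a s = loc_frac R W b t"
  using W_one W_c by (subst frac_eq) (auto simp: rel_iff intro!: bexI[of _ \<one>])

lemma rep_some:
  assumes "F \<in> carrier (loc R W)"
  shows "(SOME x. x \<in> F) \<in> carrier R \<times> W \<and> F = loc_frac R W (fst (SOME x. x \<in> F)) (snd (SOME x. x \<in> F))"
proof -
  from assms obtain z where z: "z \<in> carrier R \<times> W" "F = loc_rel R W `` {z}"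
    unfolding loc_def by (auto elim: quotientE)
  have "z \<in> F" using z rel_refl by auto
  hence x: "(SOME x. x \<in> F) \<in> F" by (rule someI)
  hence zx: "(z, (SOME x. x \<in> F)) \<in> loc_rel R W" using z by auto
  hence "(SOME x. x \<in> F) \<in> carrier R \<times> W" by (auto simp: loc_rel_def)
  moreover have "F = loc_rel R W `` {(SOME x. x \<in> F)}"
    using z zx equiv_class_eq[OF equiv_rel zx] by simp
  ultimately show ?thesis unfolding loc_frac_def by simp
qed

lemma frac_cases:
  assumes "F \<in> carrier (loc R W)"
  obtains a s where "a \<in> carrier R" "s \<in> W" "F = loc_frac R W a s"
  using rep_some[OF assms] by (metis mem_Times_iff)

lemma rep_frac:
  assumes "a \<in> carrier R" "s \<in> W"
  shows "((fst (SOME x. x \<in> loc_frac R W a s), snd (SOME x. x \<in> loc_frac R W a s)), (a, s)) \<in> loc_rel R W"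
proof -
  have F: "loc_frac R W a s \<in> carrier (loc R W)" using assms by (rule frac_in)
  note r = rep_some[OF F]
  from r have "loc_frac R W (fst (SOME x. x \<in> loc_frac R W a s)) (snd (SOME x. x \<in> loc_frac R W a s)) = loc_frac R W a s"
    by simp
  thus ?thesis using r assms by (subst (asm) frac_eq) auto
qed

lemma rel_mult:
  assumes 1: "((a', s'), (a, s)) \<in> loc_rel R W" and 2: "((b', t'), (b, t)) \<in> loc_rel R W"
  shows "((a' \<otimes> b', s' \<otimes> t'), (a \<otimes> b, s \<otimes> t)) \<in> loc_rel R W"
proof -
  from 1 2 obtain u v where u: "u \<in> W" "u \<otimes> (s \<otimes> a') = u \<otimes> (s' \<otimes> a)"
      and v: "v \<in> W" "v \<otimes> (t \<otimes> b') = v \<otimes> (t' \<otimes> b)"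
      and c: "a' \<in> carrier R" "s' \<in> W" "a \<in> carrier R" "s \<in> W" "b' \<in> carrier R" "t' \<in> W" "b \<in> carrier R" "t \<in> W"
    by (auto simp: rel_iff)
  note cc = c W_c[OF c(2)] W_c[OF c(4)] W_c[OF c(6)] W_c[OF c(8)] W_c[OF u(1)] W_c[OF v(1)]
  have "(u \<otimes> v) \<otimes> ((s \<otimes> t) \<otimes> (a' \<otimes> b')) = (u \<otimes> (s \<otimes> a')) \<otimes> (v \<otimes> (t \<otimes> b'))"
    using cc by (simp add: m_ac)
  also have "\<dots> = (u \<otimes> (s' \<otimes> a)) \<otimes> (v \<otimes> (t' \<otimes> b))" using u v by simp
  also have "\<dots> = (u \<otimes> v) \<otimes> ((s' \<otimes> t') \<otimes> (a \<otimes> b))" using cc by (simp add: m_ac)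
  finally show ?thesis using c u v W_mult by (auto simp: rel_iff intro!: bexI[of _ "u \<otimes> v"])
qed

lemma rel_add:
  assumes 1: "((a', s'), (a, s)) \<in> loc_rel R W" and 2: "((b', t'), (b, t)) \<in> loc_rel R W"
  shows "((a' \<otimes> t' \<oplus> b' \<otimes> s', s' \<otimes> t'), (a \<otimes> t \<oplus> b \<otimes> s, s \<otimes> t)) \<in> loc_rel R W"
proof -
  from 1 2 obtain u v where u: "u \<in> W" "u \<otimes> (s \<otimes> a') = u \<otimes> (s' \<otimes> a)"
      and v: "v \<in> W" "v \<otimes> (t \<otimes> b') = v \<otimes> (t' \<otimes> b)"
      and c: "a' \<in> carrier R" "s' \<in> W" "a \<in> carrier R" "s \<in> W" "b' \<in> carrier R" "t' \<in> W" "b \<in> carrier R" "t \<in> W"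
    by (auto simp: rel_iff)
  note cc = c W_c[OF c(2)] W_c[OF c(4)] W_c[OF c(6)] W_c[OF c(8)] W_c[OF u(1)] W_c[OF v(1)]
  have "(u \<otimes> v) \<otimes> ((s \<otimes> t) \<otimes> (a' \<otimes> t' \<oplus> b' \<otimes> s')) =
      (v \<otimes> t \<otimes> t') \<otimes> (u \<otimes> (s \<otimes> a')) \<oplus> (u \<otimes> s \<otimes> s') \<otimes> (v \<otimes> (t \<otimes> b'))"
    using cc by (simp add: m_ac r_distr)
  also have "\<dots> = (v \<otimes> t \<otimes> t') \<otimes> (u \<otimes> (s' \<otimes> a)) \<oplus> (u \<otimes> s \<otimes> s') \<otimes> (v \<otimes> (t' \<otimes> b))" using u v by simp
  also have "\<dots> = (u \<otimes> v) \<otimes> ((s' \<otimes> t') \<otimes> (a \<otimes> t \<oplus> b \<otimes> s))" using cc by (simp add: m_ac r_distr)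
  finally show ?thesis using c cc u v W_mult by (auto simp: rel_iff intro!: bexI[of _ "u \<otimes> v"])
qed

lemma mult_frac: "a \<in> carrier R \<Longrightarrow> s \<in> W \<Longrightarrow> b \<in> carrier R \<Longrightarrow> t \<in> W \<Longrightarrow>
   loc_frac R W a s \<otimes>\<^bsub>loc R W\<^esub> loc_frac R W b t = loc_frac R W (a \<otimes> b) (s \<otimes> t)"
proof -
  assume c: "a \<in> carrier R" "s \<in> W" "b \<in> carrier R" "t \<in> W"
  have r: "((fst (SOME x. x \<in> loc_frac R W a s) \<otimes> fst (SOME x. x \<in> loc_frac R W b t),
            snd (SOME x. x \<in> loc_frac R W a s) \<otimes> snd (SOME x. x \<in> loc_frac R W b t)), (a \<otimes> b, s \<otimes> t)) \<in> loc_rel R W"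
    by (rule rel_mult[OF rep_frac rep_frac]) (use c in auto)
  hence "loc_frac R W (fst (SOME x. x \<in> loc_frac R W a s) \<otimes> fst (SOME x. x \<in> loc_frac R W b t))
            (snd (SOME x. x \<in> loc_frac R W a s) \<otimes> snd (SOME x. x \<in> loc_frac R W b t)) = loc_frac R W (a \<otimes> b) (s \<otimes> t)"
    by (subst frac_eq) (auto simp: loc_rel_def)
  thus ?thesis by (simp add: loc_def)
qed

lemma add_frac: "a \<in> carrier R \<Longrightarrow> s \<in> W \<Longrightarrow> b \<in> carrier R \<Longrightarrow> t \<in> W \<Longrightarrow>
   loc_frac R W a s \<oplus>\<^bsub>loc R W\<^esub> loc_frac R W b t = loc_frac R W (a \<otimes> t \<oplus> b \<otimes> s) (s \<otimes> t)"
proof -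
  assume c: "a \<in> carrier R" "s \<in> W" "b \<in> carrier R" "t \<in> W"
  let ?x = "SOME x. x \<in> loc_frac R W a s" and ?y = "SOME x. x \<in> loc_frac R W b t"
  have r: "((fst ?x \<otimes> snd ?y \<oplus> fst ?y \<otimes> snd ?x, snd ?x \<otimes> snd ?y), (a \<otimes> t \<oplus> b \<otimes> s, s \<otimes> t)) \<in> loc_rel R W"
    by (rule rel_add[OF rep_frac rep_frac]) (use c in auto)
  hence "loc_frac R W (fst ?x \<otimes> snd ?y \<oplus> fst ?y \<otimes> snd ?x) (snd ?x \<otimes> snd ?y) = loc_frac R W (a \<otimes> t \<oplus> b \<otimes> s) (s \<otimes> t)"
    by (subst frac_eq) (auto simp: loc_rel_def)
  thus ?thesis by (simp add: loc_def)
qed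

lemma zero_loc: "\<zero>\<^bsub>loc R W\<^esub> = loc_frac R W \<zero> \<one>" and one_loc: "\<one>\<^bsub>loc R W\<^esub> = loc_frac R W \<one> \<one>"
  by (simp_all add: loc_def)


lemma loc_cring: "cring (loc R W)"
proof (rule cringI)
  note Wc = W_c W_one W_mult
  show "abelian_group (loc R W)"
  proof (rule abelian_groupI)
    fix x y assume x: "x \<in> carrier (loc R W)" and y: "y \<in> carrier (loc R W)"
    obtain a s where a: "a \<in> carrier R" "s \<in> W" "x = loc_frac R W a s" using x by (rule frac_cases)
    obtain b t where b: "b \<in> carrier R" "t \<in> W" "y = loc_frac R W b t" using y by (rule frac_cases)
    show "x \<oplus>\<^bsub>loc R W\<^esub> y \<in> carrier (loc R W)" using a b Wc by (simp add: add_frac frac_in)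
    show "x \<oplus>\<^bsub>loc R W\<^esub> y = y \<oplus>\<^bsub>loc R W\<^esub> x" using a b Wc
      by (simp add: add_frac) (rule frac_eqI, auto simp: m_ac a_ac)
  next
    show "\<zero>\<^bsub>loc R W\<^esub> \<in> carrier (loc R W)" using Wc by (simp add: zero_loc frac_in)
  next
    fix x y z assume x: "x \<in> carrier (loc R W)" and y: "y \<in> carrier (loc R W)" and z: "z \<in> carrier (loc R W)"
    obtain a s where a: "a \<in> carrier R" "s \<in> W" "x = loc_frac R W a s" using x by (rule frac_cases)
    obtain b t where b: "b \<in> carrier R" "t \<in> W" "y = loc_frac R W b t" using y by (rule frac_cases)
    obtain c r where c: "c \<in> carrier R" "r \<in> W" "z = loc_frac R W c r" using z by (rule frac_cases)
    show "x \<oplus>\<^bsub>loc R W\<^esub> y \<oplus>\<^bsub>loc R W\<^esub> z = x \<oplus>\<^bsub>loc R W\<^esub> (y \<oplus>\<^bsub>loc R W\<^esub> z)"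
      using a b c Wc
      by (simp add: add_frac) (rule frac_eqI, auto simp: m_ac a_ac l_distr r_distr)
  next
    fix x assume x: "x \<in> carrier (loc R W)"
    obtain a s where a: "a \<in> carrier R" "s \<in> W" "x = loc_frac R W a s" using x by (rule frac_cases)
    show "\<zero>\<^bsub>loc R W\<^esub> \<oplus>\<^bsub>loc R W\<^esub> x = x" using a Wc
      by (simp add: add_frac zero_loc)
    show "\<exists>y\<in>carrier (loc R W). y \<oplus>\<^bsub>loc R W\<^esub> x = \<zero>\<^bsub>loc R W\<^esub>"
    proof (intro bexI)
      show "loc_frac R W (\<ominus> a) s \<in> carrier (loc R W)" using a by (simp add: frac_in)
      show "loc_frac R W (\<ominus> a) s \<oplus>\<^bsub>loc R W\<^esub> x = \<zero>\<^bsub>loc R W\<^esub>" using a Wc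
        by (simp add: add_frac zero_loc) (rule frac_eqI, auto simp: l_minus m_comm[of a s] l_neg W_c)
    qed
  qed
next
  note Wc = W_c W_one W_mult
  show "comm_monoid (loc R W)"
  proof (rule comm_monoidI)
    fix x y assume x: "x \<in> carrier (loc R W)" and y: "y \<in> carrier (loc R W)"
    obtain a s where a: "a \<in> carrier R" "s \<in> W" "x = loc_frac R W a s" using x by (rule frac_cases)
    obtain b t where b: "b \<in> carrier R" "t \<in> W" "y = loc_frac R W b t" using y by (rule frac_cases)
    show "x \<otimes>\<^bsub>loc R W\<^esub> y \<in> carrier (loc R W)" using a b Wc by (simp add: mult_frac frac_in)
    show "x \<otimes>\<^bsub>loc R W\<^esub> y = y \<otimes>\<^bsub>loc R W\<^esub> x" using a b Wc
      by (simp add: mult_frac) (rule frac_eqI, auto simp: m_ac)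
  next
    show "\<one>\<^bsub>loc R W\<^esub> \<in> carrier (loc R W)" using Wc by (simp add: one_loc frac_in)
  next
    fix x y z assume x: "x \<in> carrier (loc R W)" and y: "y \<in> carrier (loc R W)" and z: "z \<in> carrier (loc R W)"
    obtain a s where a: "a \<in> carrier R" "s \<in> W" "x = loc_frac R W a s" using x by (rule frac_cases)
    obtain b t where b: "b \<in> carrier R" "t \<in> W" "y = loc_frac R W b t" using y by (rule frac_cases)
    obtain c r where c: "c \<in> carrier R" "r \<in> W" "z = loc_frac R W c r" using z by (rule frac_cases)
    show "x \<otimes>\<^bsub>loc R W\<^esub> y \<otimes>\<^bsub>loc R W\<^esub> z = x \<otimes>\<^bsub>loc R W\<^esub> (y \<otimes>\<^bsub>loc R W\<^esub> z)"
      using a b c Wc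
      by (simp add: mult_frac) (rule frac_eqI, auto simp: m_ac)
  next
    fix x assume x: "x \<in> carrier (loc R W)"
    obtain a s where a: "a \<in> carrier R" "s \<in> W" "x = loc_frac R W a s" using x by (rule frac_cases)
    show "\<one>\<^bsub>loc R W\<^esub> \<otimes>\<^bsub>loc R W\<^esub> x = x" using a Wc
      by (simp add: mult_frac one_loc)
  qed
next
  note Wc = W_c W_one W_mult
  fix x y z assume x: "x \<in> carrier (loc R W)" and y: "y \<in> carrier (loc R W)" and z: "z \<in> carrier (loc R W)"
  obtain a s where a: "a \<in> carrier R" "s \<in> W" "x = loc_frac R W a s" using x by (rule frac_cases)
  obtain b t where b: "b \<in> carrier R" "t \<in> W" "y = loc_frac R W b t" using y by (rule frac_cases)
  obtain c r where c: "c \<in> carrier R" "r \<in> W" "z = loc_frac R W c r" using z by (rule frac_cases)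
  show "(x \<oplus>\<^bsub>loc R W\<^esub> y) \<otimes>\<^bsub>loc R W\<^esub> z = x \<otimes>\<^bsub>loc R W\<^esub> z \<oplus>\<^bsub>loc R W\<^esub> y \<otimes>\<^bsub>loc R W\<^esub> z"
    using a b c Wc
    by (simp add: mult_frac add_frac) (rule frac_eqI, auto simp: m_ac a_ac l_distr r_distr)
qed

lemma loc_map_hom: "loc_map R W \<in> ring_hom R (loc R W)"
proof (rule ring_hom_memI)
  note Wc = W_c W_one W_mult
  fix x y assume x: "x \<in> carrier R" and y: "y \<in> carrier R"
  show "loc_map R W x \<in> carrier (loc R W)" using x Wc by (simp add: loc_map_def frac_in)
  show "loc_map R W (x \<otimes> y) = loc_map R W x \<otimes>\<^bsub>loc R W\<^esub> loc_map R W y"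
    using x y Wc by (simp add: loc_map_def mult_frac)
  show "loc_map R W (x \<oplus> y) = loc_map R W x \<oplus>\<^bsub>loc R W\<^esub> loc_map R W y"
    using x y Wc by (simp add: loc_map_def add_frac)
next
  show "loc_map R W \<one> = \<one>\<^bsub>loc R W\<^esub>" by (simp add: loc_map_def one_loc)
qed

lemma pow_frac: "a \<in> carrier R \<Longrightarrow> s \<in> W \<Longrightarrow> s [^] (n::nat) \<in> W"
  by (induction n) (auto simp: W_one W_mult)

lemma frac_pow: "a \<in> carrier R \<Longrightarrow> s \<in> W \<Longrightarrow>
   loc_frac R W a s [^]\<^bsub>loc R W\<^esub> (n::nat) = loc_frac R W (a [^] n) (s [^] n)"
proof (induction n)
  case 0 thus ?case by (simp add: one_loc)
next
  case (Suc n) thus ?case using W_c pow_frac[of a s n]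
    by (simp add: mult_frac)
qed

end

locale locW_split = locW +
  fixes \<pi> :: "'a \<Rightarrow> 'a" and k :: nat
  assumes pc: "\<And>x. x \<in> carrier R \<Longrightarrow> \<pi> x \<in> carrier R"
    and padd: "\<And>x y. x \<in> carrier R \<Longrightarrow> y \<in> carrier R \<Longrightarrow> \<pi> (x \<oplus> y) = \<pi> x \<oplus> \<pi> y"
    and plin: "\<And>h c. h \<in> carrier R \<Longrightarrow> c \<in> carrier R \<Longrightarrow> \<pi> (h [^] Suc k \<otimes> c) = h \<otimes> \<pi> c"
begin

lemma plin2: "h \<in> carrier R \<Longrightarrow> c \<in> carrier R \<Longrightarrow> \<pi> (h [^] k \<otimes> h \<otimes> c) = h \<otimes> \<pi> c"
  using plin by simp

definition pil :: "('a \<times> 'a) set \<Rightarrow> ('a \<times> 'a) set" where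
  "pil F = loc_frac R W (\<pi> (fst (SOME x. x \<in> F) \<otimes> snd (SOME x. x \<in> F) [^] k)) (snd (SOME x. x \<in> F))"

lemma rel_pi:
  assumes 1: "((a', s'), (a, s)) \<in> loc_rel R W"
  shows "((\<pi> (a' \<otimes> s' [^] k), s'), (\<pi> (a \<otimes> s [^] k), s)) \<in> loc_rel R W"
proof -
  from 1 obtain u where u: "u \<in> W" "u \<otimes> (s \<otimes> a') = u \<otimes> (s' \<otimes> a)"
      and c: "a' \<in> carrier R" "s' \<in> W" "a \<in> carrier R" "s \<in> W"
    by (auto simp: rel_iff)
  note cc = c W_c[OF c(2)] W_c[OF c(4)] W_c[OF u(1)]
  have e: "(u \<otimes> s) [^] k \<otimes> s' [^] k = (u \<otimes> s') [^] k \<otimes> s [^] k"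
    using cc by (simp add: pow_mult_distrib m_ac)
  have "(u \<otimes> s) [^] Suc k \<otimes> (a' \<otimes> s' [^] k) = ((u \<otimes> s) [^] k \<otimes> s' [^] k) \<otimes> (u \<otimes> (s \<otimes> a'))"
    using cc by (simp add: m_ac)
  also have "\<dots> = ((u \<otimes> s') [^] k \<otimes> s [^] k) \<otimes> (u \<otimes> (s' \<otimes> a))" using u e by simp
  also have "\<dots> = (u \<otimes> s') [^] Suc k \<otimes> (a \<otimes> s [^] k)" using cc by (simp add: m_ac)
  finally have "\<pi> ((u \<otimes> s) [^] Suc k \<otimes> (a' \<otimes> s' [^] k)) = \<pi> ((u \<otimes> s') [^] Suc k \<otimes> (a \<otimes> s [^] k))" by simp
  hence "(u \<otimes> s) \<otimes> \<pi> (a' \<otimes> s' [^] k) = (u \<otimes> s') \<otimes> \<pi> (a \<otimes> s [^] k)" using cc by (simp add: plin2)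
  hence "u \<otimes> (s \<otimes> \<pi> (a' \<otimes> s' [^] k)) = u \<otimes> (s' \<otimes> \<pi> (a \<otimes> s [^] k))" using cc pc by (simp add: m_assoc)
  thus ?thesis using c u cc pc by (auto simp: rel_iff)
qed

lemma pil_frac: "a \<in> carrier R \<Longrightarrow> s \<in> W \<Longrightarrow> pil (loc_frac R W a s) = loc_frac R W (\<pi> (a \<otimes> s [^] k)) s"
  unfolding pil_def
  using rel_pi[OF rep_frac] W_c pc by (subst frac_eq) (auto simp: loc_rel_def)

lemma pil_closed: "F \<in> carrier (loc R W) \<Longrightarrow> pil F \<in> carrier (loc R W)"
  by (erule frac_cases) (simp add: pil_frac frac_in pc W_c)

lemma pil_add: "F \<in> carrier (loc R W) \<Longrightarrow> G \<in> carrier (loc R W) \<Longrightarrow>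
  pil (F \<oplus>\<^bsub>loc R W\<^esub> G) = pil F \<oplus>\<^bsub>loc R W\<^esub> pil G"
proof -
  assume F: "F \<in> carrier (loc R W)" and G: "G \<in> carrier (loc R W)"
  obtain a s where a: "a \<in> carrier R" "s \<in> W" "F = loc_frac R W a s" using F by (rule frac_cases)
  obtain b t where b: "b \<in> carrier R" "t \<in> W" "G = loc_frac R W b t" using G by (rule frac_cases)
  note cc = a b W_c[OF a(2)] W_c[OF b(2)] W_mult[OF a(2) b(2)]
  have "\<pi> ((a \<otimes> t \<oplus> b \<otimes> s) \<otimes> (s \<otimes> t) [^] k) = \<pi> (t [^] Suc k \<otimes> (a \<otimes> s [^] k) \<oplus> s [^] Suc k \<otimes> (b \<otimes> t [^] k))"
    using cc by (simp add: pow_mult_distrib l_distr r_distr m_ac)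
  also have "\<dots> = t \<otimes> \<pi> (a \<otimes> s [^] k) \<oplus> s \<otimes> \<pi> (b \<otimes> t [^] k)"
    using cc by (simp add: padd plin2)
  finally have e: "\<pi> ((a \<otimes> t \<oplus> b \<otimes> s) \<otimes> (s \<otimes> t) [^] k) = \<pi> (a \<otimes> s [^] k) \<otimes> t \<oplus> \<pi> (b \<otimes> t [^] k) \<otimes> s"
    using cc pc by (simp add: m_comm)
  show ?thesis using cc pc
    by (simp add: a b add_frac pil_frac e)
qed

lemma pil_lin: "H \<in> carrier (loc R W) \<Longrightarrow> C \<in> carrier (loc R W) \<Longrightarrow>
  pil (H [^]\<^bsub>loc R W\<^esub> Suc k \<otimes>\<^bsub>loc R W\<^esub> C) = H \<otimes>\<^bsub>loc R W\<^esub> pil C"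
proof -
  assume H: "H \<in> carrier (loc R W)" and C: "C \<in> carrier (loc R W)"
  obtain h w where h: "h \<in> carrier R" "w \<in> W" "H = loc_frac R W h w" using H by (rule frac_cases)
  obtain c r where c: "c \<in> carrier R" "r \<in> W" "C = loc_frac R W c r" using C by (rule frac_cases)
  note cc = h c W_c[OF h(2)] W_c[OF c(2)] W_mult[OF pow_frac[OF h(1) h(2)] c(2)]
  have "\<pi> ((h [^] Suc k \<otimes> c) \<otimes> (w [^] Suc k \<otimes> r) [^] k) = \<pi> ((h \<otimes> w [^] k) [^] Suc k \<otimes> (c \<otimes> r [^] k))"
    using cc by (simp add: pow_mult_distrib nat_pow_pow m_ac mult.commute)
  also have "\<dots> = (h \<otimes> w [^] k) \<otimes> \<pi> (c \<otimes> r [^] k)" by (rule plin) (use cc in auto)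
  finally have e: "\<pi> ((h [^] Suc k \<otimes> c) \<otimes> (w [^] Suc k \<otimes> r) [^] k) = (h \<otimes> w [^] k) \<otimes> \<pi> (c \<otimes> r [^] k)" .
  have wk: "\<And>n. w [^] (n::nat) \<in> W" "\<And>n. r [^] (n::nat) \<in> W" using pow_frac h c by auto
  have "H [^]\<^bsub>loc R W\<^esub> Suc k \<otimes>\<^bsub>loc R W\<^esub> C = loc_frac R W (h [^] Suc k) (w [^] Suc k) \<otimes>\<^bsub>loc R W\<^esub> loc_frac R W c r"
    by (simp only: h c frac_pow[OF h(1) h(2)])
  also have "\<dots> = loc_frac R W (h [^] Suc k \<otimes> c) (w [^] Suc k \<otimes> r)"
    using mult_frac[OF nat_pow_closed[OF h(1)] wk(1) c(1) c(2)] .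
  finally have 1: "pil (H [^]\<^bsub>loc R W\<^esub> Suc k \<otimes>\<^bsub>loc R W\<^esub> C) = loc_frac R W ((h \<otimes> w [^] k) \<otimes> \<pi> (c \<otimes> r [^] k)) (w [^] Suc k \<otimes> r)"
    using e h c wk W_mult by (simp add: pil_frac del: nat_pow_Suc)
  have 2: "H \<otimes>\<^bsub>loc R W\<^esub> pil C = loc_frac R W (h \<otimes> \<pi> (c \<otimes> r [^] k)) (w \<otimes> r)"
    using h c cc pc wk by (simp add: pil_frac mult_frac)
  show ?thesis unfolding 1 2
    by (rule frac_eqI) (use cc pc wk W_mult in \<open>auto simp: m_ac\<close>)
qed

lemma pil_map: "a \<in> carrier R \<Longrightarrow> pil (loc_map R W a) = loc_map R W (\<pi> a)"
  unfolding loc_map_def using W_one by (simp add: pil_frac)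

end

abbreviation (input) lk :: "('a \<Rightarrow>\<^sub>0 'b::zero) \<Rightarrow> 'a \<Rightarrow> 'b" where "lk \<equiv> Poly_Mapping.lookup"
abbreviation (input) ks :: "('a \<Rightarrow>\<^sub>0 'b::zero) \<Rightarrow> 'a set" where "ks \<equiv> Poly_Mapping.keys"

type_synonym mono = "nat \<Rightarrow>\<^sub>0 nat"

definition pairs :: "mono \<Rightarrow> (mono \<times> mono) set" where
  "pairs m = {(a, b). a + b = m}"

definition mle :: "mono \<Rightarrow> mono \<Rightarrow> bool" where
  "mle a m \<longleftrightarrow> (\<forall>i. Poly_Mapping.lookup a i \<le> Poly_Mapping.lookup m i)"

lemma mono_eq_iff: "(a::mono) = b \<longleftrightarrow> (\<forall>i. Poly_Mapping.lookup a i = Poly_Mapping.lookup b i)"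
  by (auto intro: poly_mapping_eqI)

lemma finite_mle: "finite {a. mle a m}"
proof -
  let ?f = "\<lambda>a. restrict (Poly_Mapping.lookup a) (Poly_Mapping.keys m)"
  have inj: "inj_on ?f {a. mle a m}"
  proof (rule inj_onI)
    fix a b assume a: "a \<in> {a. mle a m}" and b: "b \<in> {a. mle a m}" and e: "?f a = ?f b"
    show "a = b"
    proof (rule poly_mapping_eqI)
      fix i show "Poly_Mapping.lookup a i = Poly_Mapping.lookup b i"
      proof (cases "i \<in> Poly_Mapping.keys m")
        case True thus ?thesis using e by (metis restrict_apply')
      next
        case False
        hence "Poly_Mapping.lookup m i = 0" by (simp add: in_keys_iff)
        thus ?thesis using a b unfolding mle_def by (metis le_zero_eq mem_Collect_eq)
      qed
    qed
  qed
  have "?f ` {a. mle a m} \<subseteq> PiE (Poly_Mapping.keys m) (\<lambda>i. {..Poly_Mapping.lookup m i})"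
    unfolding mle_def by auto
  hence "finite (?f ` {a. mle a m})" by (rule finite_subset) (simp add: finite_PiE)
  thus ?thesis using inj finite_image_iff by blast
qed

lemma pairs_mle: "(a, b) \<in> pairs m \<Longrightarrow> mle a m \<and> mle b m"
  unfolding pairs_def mle_def by (auto simp: lookup_add)

lemma finite_pairs: "finite (pairs m)"
proof -
  have "pairs m \<subseteq> {a. mle a m} \<times> {a. mle a m}" using pairs_mle by auto
  thus ?thesis by (rule finite_subset) (simp add: finite_mle)
qed

lemma mle_trans: "mle a b \<Longrightarrow> mle b c \<Longrightarrow> mle a c"
  unfolding mle_def using order_trans by blast

lemma mono_add_cancel: "(a::mono) + b = a + c \<Longrightarrow> b = c"
  by (simp add: mono_eq_iff lookup_add)

lemma mono_add_cancel2: "(a::mono) + c = b + c \<Longrightarrow> a = b"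
  by (simp add: mono_eq_iff lookup_add)

section \<open>The polynomial ring\<close>

lemma mp_carrier: "P \<in> carrier (mpoly_ring n) \<longleftrightarrow> (\<forall>m\<in>ks P. ks m \<subseteq> {..<n})"
  by (simp add: mpoly_ring_def)

lemma mp_ops [simp]: "(\<otimes>\<^bsub>mpoly_ring n\<^esub>) = (*)" "(\<oplus>\<^bsub>mpoly_ring n\<^esub>) = (+)"
  "\<one>\<^bsub>mpoly_ring n\<^esub> = 1" "\<zero>\<^bsub>mpoly_ring n\<^esub> = 0"
  by (simp_all add: mpoly_ring_def)

lemma mp_add_closed: "P \<in> carrier (mpoly_ring n) \<Longrightarrow> Q \<in> carrier (mpoly_ring n) \<Longrightarrow> P + Q \<in> carrier (mpoly_ring n)"
  unfolding mp_carrier using keys_add[of P Q] by blast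

lemma mp_mult_closed:
  fixes P Q :: "(mono \<Rightarrow>\<^sub>0 'k::field)"
  shows "P \<in> carrier (mpoly_ring n) \<Longrightarrow> Q \<in> carrier (mpoly_ring n) \<Longrightarrow> P * Q \<in> carrier (mpoly_ring n)"
  unfolding mp_carrier
proof (intro ballI)
  fix m assume P: "\<forall>m\<in>ks P. ks m \<subseteq> {..<n}" and Q: "\<forall>m\<in>ks Q. ks m \<subseteq> {..<n}" and m: "m \<in> ks (P * Q)"
  then obtain a b where ab: "m = a + b" "a \<in> ks P" "b \<in> ks Q" using keys_mult[of P Q] by blast
  show "ks m \<subseteq> {..<n}" using ab P Q keys_add[of a b] by blast
qed

lemma mp_uminus_closed: "P \<in> carrier (mpoly_ring n) \<Longrightarrow> - P \<in> carrier (mpoly_ring n)"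
  unfolding mp_carrier by (simp add: in_keys_iff)

lemma mp_one_closed: "1 \<in> carrier (mpoly_ring n)" and mp_zero_closed: "0 \<in> carrier (mpoly_ring n)"
  unfolding mp_carrier by simp_all

lemma mp_cring: "cring (mpoly_ring n)"
proof (rule cringI)
  show "abelian_group (mpoly_ring n)"
    by (rule abelian_groupI) (auto simp: mp_add_closed mp_zero_closed add_ac intro!: bexI[of _ "- _"] mp_uminus_closed)
  show "comm_monoid (mpoly_ring n)"
    by (rule comm_monoidI) (auto simp: mp_mult_closed mp_one_closed mult_ac)
qed (simp add: distrib_right)

lemma mp_pow [simp]: "x [^]\<^bsub>mpoly_ring n\<^esub> (k::nat) = x ^ k"
  by (induction k) (simp_all add: mpoly_ring_def)

section \<open>The power series ring\<close>

lemma ps_carrier: "f \<in> carrier (ps_ring n) \<longleftrightarrow> (\<forall>m. \<not> ks m \<subseteq> {..<n} \<longrightarrow> f m = 0)"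
  by (simp add: ps_ring_def)

lemma ps_ops [simp]: "(\<otimes>\<^bsub>ps_ring n\<^esub>) = ps_mult" "(\<oplus>\<^bsub>ps_ring n\<^esub>) = (\<lambda>f g m. f m + g m)"
  "\<one>\<^bsub>ps_ring n\<^esub> = (\<lambda>m. if m = 0 then 1 else 0)" "\<zero>\<^bsub>ps_ring n\<^esub> = (\<lambda>_. 0)"
  by (simp_all add: ps_ring_def)

lemma ps_mult_pairs: "ps_mult f g m = (\<Sum>(a, b) \<in> pairs m. f a * g b)"
  by (simp add: ps_mult_def pairs_def)

lemma ps_mult_comm: "ps_mult f g = ps_mult g f"
proof
  fix m
  have "(\<Sum>(a, b) \<in> pairs m. f a * g b) = (\<Sum>(a, b) \<in> pairs m. g a * f b)"
    by (rule sum.reindex_bij_witness[of _ "\<lambda>(a,b). (b,a)" "\<lambda>(a,b). (b,a)"])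
       (auto simp: pairs_def add.commute mult.commute)
  thus "ps_mult f g m = ps_mult g f m" by (simp add: ps_mult_pairs)
qed

lemma ps_mult_one: "ps_mult (\<lambda>m. if m = 0 then 1 else 0) f = f"
proof
  fix m :: mono
  have "(\<Sum>x \<in> pairs m. (if fst x = 0 then 1 else 0) * f (snd x)) = (\<Sum>x \<in> {(0::mono, m)}. (if fst x = 0 then 1 else 0) * f (snd x))"
    by (rule sum.mono_neutral_right[OF finite_pairs]) (auto simp: pairs_def)
  thus "ps_mult (\<lambda>m. if m = 0 then 1 else 0) f m = f m" by (simp add: ps_mult_pairs split_def)
qed
lemma ps_mult_distrib: "ps_mult (\<lambda>m. f m + g m) h = (\<lambda>m. ps_mult f h m + ps_mult g h m)"
  by (rule ext) (simp add: ps_mult_pairs distrib_right sum.distrib split_def)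

lemma ps_mult_assoc: "ps_mult (ps_mult f g) h = ps_mult f (ps_mult g h)"
proof
  fix m :: mono
  have "ps_mult (ps_mult f g) h m = (\<Sum>x \<in> pairs m. \<Sum>y \<in> pairs (fst x). f (fst y) * g (snd y) * h (snd x))"
    by (simp add: ps_mult_pairs sum_distrib_right split_def)
  also have "\<dots> = (\<Sum>z \<in> Sigma (pairs m) (\<lambda>x. pairs (fst x)). f (fst (snd z)) * g (snd (snd z)) * h (snd (fst z)))"
    by (subst sum.Sigma) (auto simp: finite_pairs split_def)
  also have "\<dots> = (\<Sum>z \<in> Sigma (pairs m) (\<lambda>x. pairs (snd x)). f (fst (fst z)) * (g (fst (snd z)) * h (snd (snd z))))"
    by (rule sum.reindex_bij_witness[of _ "\<lambda>z. ((fst (fst z) + fst (snd z), snd (snd z)), (fst (fst z), fst (snd z)))"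
          "\<lambda>z. ((fst (snd z), snd (snd z) + snd (fst z)), (snd (snd z), snd (fst z)))"])
       (auto simp: pairs_def add.assoc mult.assoc)
  also have "\<dots> = (\<Sum>x \<in> pairs m. \<Sum>y \<in> pairs (snd x). f (fst x) * (g (fst y) * h (snd y)))"
    by (subst sum.Sigma) (auto simp: finite_pairs split_def)
  also have "\<dots> = ps_mult f (ps_mult g h) m"
    by (simp add: ps_mult_pairs sum_distrib_left split_def)
  finally show "ps_mult (ps_mult f g) h m = ps_mult f (ps_mult g h) m" .
qed

lemma ps_mult_closed: "f \<in> carrier (ps_ring n) \<Longrightarrow> g \<in> carrier (ps_ring n) \<Longrightarrow> ps_mult f g \<in> carrier (ps_ring n)"
  unfolding ps_carrier
proof (intro allI impI)
  fix m :: mono assume f: "\<forall>m. \<not> ks m \<subseteq> {..<n} \<longrightarrow> f m = 0" and g: "\<forall>m. \<not> ks m \<subseteq> {..<n} \<longrightarrow> g m = 0"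
    and m: "\<not> ks m \<subseteq> {..<n}"
  have "f a * g b = 0" if "(a, b) \<in> pairs m" for a b
  proof -
    have "ks m \<subseteq> ks a \<union> ks b" using that keys_add[of a b] by (auto simp: pairs_def)
    hence "\<not> ks a \<subseteq> {..<n} \<or> \<not> ks b \<subseteq> {..<n}" using m by blast
    thus ?thesis using f g by auto
  qed
  thus "ps_mult f g m = 0" unfolding ps_mult_pairs by (intro sum.neutral) auto
qed

lemma ps_cring: "cring (ps_ring (n::nat) :: ((mono \<Rightarrow> 'k::field) ring))"
proof (rule cringI)
  show "abelian_group (ps_ring n :: ((mono \<Rightarrow> 'k::field) ring))"
    by (rule abelian_groupI) (auto simp: ps_carrier add_ac intro!: bexI[of _ "\<lambda>m. - _ m"])
  show "comm_monoid (ps_ring n :: ((mono \<Rightarrow> 'k::field) ring))"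
  proof (rule comm_monoidI)
    show "\<one>\<^bsub>ps_ring n\<^esub> \<in> carrier (ps_ring n :: ((mono \<Rightarrow> 'k::field) ring))"
      by (auto simp: ps_carrier)
  qed (auto simp: ps_mult_closed ps_mult_one ps_mult_assoc intro: ps_mult_comm)
qed (simp add: ps_mult_distrib)

section \<open>The inclusion of polynomials into power series\<close>

lemma lookup_mult_pairs:
  fixes P Q :: "mono \<Rightarrow>\<^sub>0 'k::comm_semiring_1"
  shows "lk (P * Q) k = (\<Sum>(a, b)\<in>pairs k. lk P a * lk Q b)"
proof -
  let ?g = "\<lambda>l q. if k = l + q then lk P l * lk Q q else 0"
  have fin: "finite {q. (if k = l + q then lk Q q else 0) \<noteq> 0}" for l
    by (rule finite_subset[of _ "snd ` pairs k"]) (auto simp: finite_pairs, auto simp: pairs_def image_iff)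
  have 1: "lk (P * Q) k = (\<Sum>l. \<Sum>q. ?g l q)"
    unfolding lookup_mult when_def
    by (subst Sum_any_right_distrib[OF fin]) (auto intro!: Sum_any.cong)
  have 2: "(\<Sum>l. \<Sum>q. ?g l q) = (\<Sum>(l, q). ?g l q)"
    by (rule Sum_any.cartesian_product[of "fst ` pairs k \<times> snd ` pairs k"])
       (auto simp: finite_pairs, auto simp: pairs_def image_iff split: if_splits)
  have 3: "(\<Sum>(l, q). ?g l q) = (\<Sum>(l, q)\<in>pairs k. ?g l q)"
    by (rule Sum_any.expand_superset) (auto simp: finite_pairs, auto simp: pairs_def split: if_splits)
  have 4: "(\<Sum>(l, q)\<in>pairs k. ?g l q) = (\<Sum>(a, b)\<in>pairs k. lk P a * lk Q b)"
    by (rule sum.cong) (auto simp: pairs_def)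
  show ?thesis using 1 2 3 4 by simp
qed

lemma mpoly_to_ps_mult: "mpoly_to_ps (P * Q) = ps_mult (mpoly_to_ps P) (mpoly_to_ps Q)"
  by (rule ext) (simp add: mpoly_to_ps_def ps_mult_pairs lookup_mult_pairs)

lemma mpoly_to_ps_carrier: "P \<in> carrier (mpoly_ring n) \<Longrightarrow> mpoly_to_ps P \<in> carrier (ps_ring n)"
  unfolding mp_carrier ps_carrier mpoly_to_ps_def by (auto simp: in_keys_iff)

lemma mpoly_to_ps_hom: "mpoly_to_ps \<in> ring_hom (mpoly_ring n) (ps_ring n :: ((mono \<Rightarrow> 'k::field) ring))"
  by (rule ring_hom_memI)
     (auto simp: mpoly_to_ps_carrier mpoly_to_ps_mult[unfolded mpoly_to_ps_def] lookup_add lookup_one when_def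
        mpoly_to_ps_carrier[unfolded mpoly_to_ps_def] mpoly_to_ps_def)

lemma mpoly_to_ps_inj: "mpoly_to_ps P = mpoly_to_ps Q \<Longrightarrow> P = Q"
  by (simp add: mpoly_to_ps_def)

section \<open>Frobenius\<close>

definition msc :: "nat \<Rightarrow> mono \<Rightarrow> mono" where
  "msc q g = Abs_poly_mapping (\<lambda>i. q * lk g i)"

lemma lookup_msc [simp]: "lk (msc q g) i = q * lk g i"
proof -
  have "finite {i. q * lk g i \<noteq> 0}" by (rule finite_subset[of _ "{i. lk g i \<noteq> 0}"]) auto
  thus ?thesis unfolding msc_def by simp
qed

lemma msc_Suc: "msc (Suc q) g = g + msc q g"
  by (simp add: mono_eq_iff lookup_add)

lemma msc_0 [simp]: "msc 0 g = 0"
  by (simp add: mono_eq_iff)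

lemma msc_inj: "0 < q \<Longrightarrow> msc q a = msc q b \<Longrightarrow> a = b"
  by (simp add: mono_eq_iff)

lemma msc_add: "msc q (a + b) = msc q a + msc q b"
  by (simp add: mono_eq_iff lookup_add algebra_simps)

lemma mle_msc: "0 < q \<Longrightarrow> mle (msc q g) m \<Longrightarrow> mle g m"
proof -
  assume q: "0 < q" and h: "mle (msc q g) m"
  show ?thesis unfolding mle_def
  proof
    fix i
    have "lk g i \<le> q * lk g i" using q by simp
    also have "\<dots> \<le> lk m i" using h unfolding mle_def by (metis lookup_msc)
    finally show "lk g i \<le> lk m i" .
  qed
qed

lemma single_pow: "(Poly_Mapping.single b (c::'k::comm_semiring_1)) ^ k = Poly_Mapping.single (msc k b) (c ^ k)"
  by (induction k) (simp_all add: mult_single msc_Suc)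

lemma poly_sum_single: "P = (\<Sum>b\<in>ks P. Poly_Mapping.single b (lk P b))"
  by (rule poly_mapping_eqI) (simp add: lookup_sum lookup_single when_def in_keys_iff)

lemma CHAR_poly: "CHAR(mono \<Rightarrow>\<^sub>0 'k::comm_semiring_1) = CHAR('k)"
proof (rule CHAR_eqI)
  have e: "(of_nat x :: mono \<Rightarrow>\<^sub>0 'k) = 0 \<longleftrightarrow> (of_nat x :: 'k) = 0" for x
  proof
    assume "(of_nat x :: mono \<Rightarrow>\<^sub>0 'k) = 0"
    hence "lk (of_nat x :: mono \<Rightarrow>\<^sub>0 'k) 0 = 0" by simp
    thus "(of_nat x :: 'k) = 0" by (simp add: lookup_of_nat when_def)
  next
    assume "(of_nat x :: 'k) = 0"
    hence "Poly_Mapping.single 0 (of_nat x :: 'k) = 0" by simp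
    thus "(of_nat x :: mono \<Rightarrow>\<^sub>0 'k) = 0" by (metis single_of_nat)
  qed
  show "(of_nat CHAR('k) :: mono \<Rightarrow>\<^sub>0 'k) = 0" using e by simp
  show "CHAR('k) dvd x" if "(of_nat x :: mono \<Rightarrow>\<^sub>0 'k) = 0" for x
    using that e of_nat_eq_0_iff_char_dvd by blast
qed

lemma poly_frob:
  fixes P :: "mono \<Rightarrow>\<^sub>0 'k::field"
  assumes "Factorial_Ring.prime CHAR('k)" "q = CHAR('k) ^ e"
  shows "P ^ q = (\<Sum>b\<in>ks P. Poly_Mapping.single (msc q b) (lk P b ^ q))"
proof -
  have pr: "Factorial_Ring.prime CHAR(mono \<Rightarrow>\<^sub>0 'k)" "q = CHAR(mono \<Rightarrow>\<^sub>0 'k) ^ e" using assms by (simp_all add: CHAR_poly)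
  have "P ^ q = (\<Sum>b\<in>ks P. Poly_Mapping.single b (lk P b)) ^ q" by (subst poly_sum_single) simp
  also have "\<dots> = (\<Sum>b\<in>ks P. Poly_Mapping.single b (lk P b) ^ q)" by (rule freshmans_dream_sum'[OF pr])
  finally show ?thesis by (simp add: single_pow)
qed

lemma lookup_poly_frob:
  fixes P :: "mono \<Rightarrow>\<^sub>0 'k::field"
  assumes "Factorial_Ring.prime CHAR('k)" "q = CHAR('k) ^ e"
  shows "lk (P ^ q) m = (if \<exists>g. m = msc q g then lk P (THE g. m = msc q g) ^ q else 0)"
proof -
  have q: "0 < q" using assms prime_gt_0_nat by simp
  have "lk (P ^ q) m = (\<Sum>b\<in>ks P. if msc q b = m then lk P b ^ q else 0)"
    by (simp add: poly_frob[OF assms] lookup_sum lookup_single when_def)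
  also have "\<dots> = (if \<exists>g. m = msc q g then lk P (THE g. m = msc q g) ^ q else 0)"
  proof (cases "\<exists>g. m = msc q g")
    case True
    then obtain g where g: "m = msc q g" by blast
    have th: "(THE g. m = msc q g) = g" using g msc_inj[OF q] by (intro the_equality) auto
    have "(\<Sum>b\<in>ks P. if msc q b = m then lk P b ^ q else 0) = (\<Sum>b\<in>ks P. if b = g then lk P b ^ q else 0)"
      using g msc_inj[OF q] by (intro sum.cong) auto
    also have "\<dots> = lk P g ^ q" using q by (simp add: in_keys_iff)
    finally show ?thesis using True th by simp
  next
    case False thus ?thesis by (auto intro!: sum.neutral)
  qed
  finally show ?thesis .
qed

lemma ps_pow_Suc: "h [^]\<^bsub>ps_ring n\<^esub> Suc k = ps_mult (h [^]\<^bsub>ps_ring n\<^esub> k) h"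
  by simp

lemma ps_pow_0: "h [^]\<^bsub>ps_ring n\<^esub> (0::nat) = (\<lambda>m. if m = 0 then 1 else 0)"
  by simp

lemma ps_pow_lookup: "(lk P) [^]\<^bsub>ps_ring n\<^esub> (k::nat) = lk (P ^ k)"
proof (induction k)
  case 0 thus ?case by (auto simp: lookup_one when_def)
next
  case (Suc k)
  thus ?case using mpoly_to_ps_mult[of "P ^ k" P]
    by (simp add: mpoly_to_ps_def mult.commute)
qed

definition trunc :: "mono \<Rightarrow> (mono \<Rightarrow> 'k::zero) \<Rightarrow> (mono \<Rightarrow>\<^sub>0 'k)" where
  "trunc m h = Abs_poly_mapping (\<lambda>a. if mle a m then h a else 0)"

lemma lookup_trunc: "lk (trunc m h) a = (if mle a m then h a else 0)"
proof -
  have "finite {a. (if mle a m then h a else 0) \<noteq> 0}"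
    by (rule finite_subset[OF _ finite_mle[of m]]) auto
  thus ?thesis unfolding trunc_def by simp
qed

lemma ps_mult_local:
  assumes "\<And>a. mle a m \<Longrightarrow> f a = f' a" "\<And>a. mle a m \<Longrightarrow> g a = g' a"
  shows "ps_mult f g m = ps_mult f' g' m"
  unfolding ps_mult_pairs using assms pairs_mle by (intro sum.cong) auto

lemma ps_pow_trunc:
  "mle b m \<Longrightarrow> (h [^]\<^bsub>ps_ring n\<^esub> (k::nat)) b = (lk (trunc m h) [^]\<^bsub>ps_ring n\<^esub> k) b"
proof (induction k arbitrary: b)
  case 0 thus ?case by simp
next
  case (Suc k)
  show ?case unfolding ps_pow_Suc
  proof (rule ps_mult_local)
    fix a assume "mle a b"
    hence a: "mle a m" using Suc.prems mle_trans by blast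
    show "(h [^]\<^bsub>ps_ring n\<^esub> k) a = (lk (trunc m h) [^]\<^bsub>ps_ring n\<^esub> k) a" by (rule Suc.IH[OF a])
    show "h a = lk (trunc m h) a" using a by (simp add: lookup_trunc)
  qed
qed

lemma ps_frob:
  fixes h :: "mono \<Rightarrow> 'k::field"
  assumes "Factorial_Ring.prime CHAR('k)" "q = CHAR('k) ^ e"
  shows "(h [^]\<^bsub>ps_ring n\<^esub> q) m = (if \<exists>g. m = msc q g then h (THE g. m = msc q g) ^ q else 0)"
proof -
  have q: "0 < q" using assms prime_gt_0_nat by simp
  have "(h [^]\<^bsub>ps_ring n\<^esub> q) m = lk (trunc m h ^ q) m"
    using ps_pow_trunc[where b=m and m=m and h=h and n=n and k=q] by (simp add: mle_def ps_pow_lookup)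
  also have "\<dots> = (if \<exists>g. m = msc q g then h (THE g. m = msc q g) ^ q else 0)"
  proof (cases "\<exists>g. m = msc q g")
    case True
    then obtain g where g: "m = msc q g" by blast
    have th: "(THE g. m = msc q g) = g" using g msc_inj[OF q] by (intro the_equality) auto
    have "mle g m" using g mle_msc[OF q, of g m] by (simp add: mle_def)
    thus ?thesis using True th by (simp add: lookup_poly_frob[OF assms] lookup_trunc)
  next
    case False thus ?thesis by (simp add: lookup_poly_frob[OF assms])
  qed
  finally show ?thesis .
qed

lemma mp_pow_closed: "P \<in> carrier (mpoly_ring n) \<Longrightarrow> P ^ k \<in> carrier (mpoly_ring n)"
  by (induction k) (simp_all add: mp_one_closed mp_mult_closed)

lemma mod_pos_imp: "0 < x mod (q::nat) \<Longrightarrow> 0 < x"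
  by (cases x) auto

lemma mono_div_aux:
  fixes q d g a x :: nat
  assumes "q * d + x = q * g + a" "a < q"
  shows "d \<le> g \<and> x = q * (g - d) + a"
proof -
  have "d \<le> g"
  proof (rule ccontr)
    assume "\<not> d \<le> g"
    hence "Suc g \<le> d" by simp
    hence "q * Suc g \<le> q * d" by (rule mult_le_mono2)
    thus False using assms by simp
  qed
  moreover have "x = q * (g - d) + a"
    using assms \<open>d \<le> g\<close> by (simp add: diff_mult_distrib2)
  ultimately show ?thesis by simp
qed

locale frob_setup =
  fixes q :: nat and B :: "'k::field set" and rep :: "'k \<Rightarrow> 'k \<Rightarrow> 'k" and e :: nat
  assumes pr: "Factorial_Ring.prime CHAR('k)" and qdef: "q = CHAR('k) ^ e"
    and rep_add: "\<And>b x y. b \<in> B \<Longrightarrow> rep b (x + y) = rep b x + rep b y"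
    and rep_lin: "\<And>b c v. b \<in> B \<Longrightarrow> rep b (c ^ q * v) = c * rep b v"
    and rep_span: "\<And>V. finite V \<Longrightarrow> \<exists>B0 \<subseteq> B. finite B0 \<and> (\<forall>v\<in>V. v = (\<Sum>b\<in>B0. rep b v ^ q * b))"
begin

lemma q_pos: "0 < q" using pr qdef prime_gt_0_nat by simp

lemma rep_zero: "b \<in> B \<Longrightarrow> rep b 0 = 0"
  using rep_add[of b 0 0] by (metis add_cancel_right_right)

lemma rep_sum: "b \<in> B \<Longrightarrow> rep b (sum f S) = (\<Sum>x\<in>S. rep b (f x))"
  by (induction S rule: infinite_finite_induct) (auto simp: rep_zero rep_add)

definition Iset :: "('k \<times> mono) set" where
  "Iset = {(b, a). b \<in> B \<and> (\<forall>i. lk a i < q)}"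

definition Pf :: "('k \<times> mono) \<Rightarrow> (mono \<Rightarrow> 'k) \<Rightarrow> (mono \<Rightarrow> 'k)" where
  "Pf i f = (\<lambda>g. rep (fst i) (f (msc q g + snd i)))"

definition PT :: "('k \<times> mono) \<Rightarrow> (mono \<Rightarrow>\<^sub>0 'k) \<Rightarrow> (mono \<Rightarrow>\<^sub>0 'k)" where
  "PT i P = Abs_poly_mapping (Pf i (lk P))"

lemma Pf_fin: "i \<in> Iset \<Longrightarrow> finite {g. Pf i (lk P) g \<noteq> 0}"
proof -
  assume i: "i \<in> Iset"
  have "{g. Pf i (lk P) g \<noteq> 0} \<subseteq> (\<lambda>g. msc q g + snd i) -` ks P"
    using i by (auto simp: Pf_def Iset_def in_keys_iff rep_zero)
  moreover have "finite ((\<lambda>g. msc q g + snd i) -` ks P)"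
    by (rule finite_vimageI) (auto intro: inj_onI dest: mono_add_cancel2 msc_inj[OF q_pos])
  ultimately show ?thesis by (rule finite_subset)
qed

lemma lookup_PT: "i \<in> Iset \<Longrightarrow> lk (PT i P) = Pf i (lk P)"
  unfolding PT_def using Pf_fin by simp

lemma PT_C: "i \<in> Iset \<Longrightarrow> Pf i (mpoly_to_ps P) = mpoly_to_ps (PT i P)"
  by (simp add: lookup_PT mpoly_to_ps_def)

lemma Pf_carrier: "i \<in> Iset \<Longrightarrow> f \<in> carrier (ps_ring n) \<Longrightarrow> Pf i f \<in> carrier (ps_ring n)"
proof -
  assume i: "i \<in> Iset" and f: "f \<in> carrier (ps_ring n)"
  show ?thesis unfolding ps_carrier
  proof (intro allI impI)
    fix g :: mono assume g: "\<not> ks g \<subseteq> {..<n}"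
    have "ks g \<subseteq> ks (msc q g + snd i)" using q_pos by (auto simp: in_keys_iff lookup_add)
    hence "f (msc q g + snd i) = 0" using f g unfolding ps_carrier by blast
    thus "Pf i f g = 0" using i by (cases i) (simp add: Pf_def rep_zero Iset_def)
  qed
qed

lemma Pf_add: "i \<in> Iset \<Longrightarrow> Pf i (\<lambda>m. f m + g m) = (\<lambda>m. Pf i f m + Pf i g m)"
  by (auto simp: Pf_def Iset_def rep_add)

lemma Pf_lin:
  assumes i: "i \<in> Iset"
  shows "Pf i (ps_mult (h [^]\<^bsub>ps_ring n\<^esub> q) c) = ps_mult h (Pf i c)"
proof
  fix g :: mono
  obtain b a where ba: "i = (b, a)" "b \<in> B" "\<And>j. lk a j < q" using i unfolding Iset_def by auto
  let ?M = "msc q g + a"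
  let ?G = "\<lambda>x. rep b ((h [^]\<^bsub>ps_ring n\<^esub> q) (fst x) * c (snd x))"
  let ?g = "\<lambda>y. (msc q (fst y), msc q (snd y) + a)"
  have hq: "(h [^]\<^bsub>ps_ring n\<^esub> q) m = (if \<exists>g. m = msc q g then h (THE g. m = msc q g) ^ q else 0)" for m
    by (rule ps_frob[OF pr qdef])
  have hq2: "(h [^]\<^bsub>ps_ring n\<^esub> q) (msc q d) = h d ^ q" for d
  proof -
    have "(THE g. msc q d = msc q g) = d" using msc_inj[OF q_pos] by blast
    thus ?thesis using hq[of "msc q d"] by auto
  qed
  have "Pf i (ps_mult (h [^]\<^bsub>ps_ring n\<^esub> q) c) g = (\<Sum>x\<in>pairs ?M. ?G x)"
    using ba by (simp add: Pf_def ps_mult_pairs rep_sum split_def)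
  also have "\<dots> = (\<Sum>x\<in>?g ` pairs g. ?G x)"
  proof (rule sum.mono_neutral_right[OF finite_pairs])
    show "?g ` pairs g \<subseteq> pairs ?M"
      by (auto simp: pairs_def msc_add add_ac)
    show "\<forall>x\<in>pairs ?M - ?g ` pairs g. ?G x = 0"
    proof
      fix x assume x: "x \<in> pairs ?M - ?g ` pairs g"
      obtain u d where ud: "x = (u, d)" "u + d = ?M" using x by (auto simp: pairs_def)
      have "\<not> (\<exists>w. u = msc q w)"
      proof
        assume "\<exists>w. u = msc q w"
        then obtain w where w: "u = msc q w" by blast
        have aux: "lk w j \<le> lk g j \<and> lk d j = q * (lk g j - lk w j) + lk a j" for j
          using ud(2) w ba(3)[of j] by (intro mono_div_aux) (auto simp: mono_eq_iff lookup_add)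
        have "(w, g - w) \<in> pairs g" using aux by (auto simp: pairs_def mono_eq_iff lookup_add lookup_minus)
        moreover have "x = ?g (w, g - w)" using aux ud w by (auto simp: mono_eq_iff lookup_add lookup_minus)
        ultimately show False using x by blast
      qed
      thus "?G x = 0" using ud hq[of u] ba by (simp add: rep_zero)
    qed
  qed
  also have "\<dots> = (\<Sum>y\<in>pairs g. ?G (?g y))"
  proof -
    have "inj_on ?g (pairs g)"
      by (auto intro!: inj_onI dest: mono_add_cancel2 msc_inj[OF q_pos])
    thus ?thesis using sum.reindex[of ?g "pairs g" ?G] by (simp add: comp_def)
  qed
  also have "\<dots> = (\<Sum>y\<in>pairs g. h (fst y) * Pf i c (snd y))"
    using ba by (intro sum.cong) (auto simp: hq2 rep_lin Pf_def)
  also have "\<dots> = ps_mult h (Pf i c) g" by (simp add: ps_mult_pairs split_def)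
  finally show "Pf i (ps_mult (h [^]\<^bsub>ps_ring n\<^esub> q) c) g = ps_mult h (Pf i c) g" .
qed

lemma PT_carrier: "i \<in> Iset \<Longrightarrow> P \<in> carrier (mpoly_ring n) \<Longrightarrow> PT i P \<in> carrier (mpoly_ring n)"
proof -
  assume i: "i \<in> Iset" and P: "P \<in> carrier (mpoly_ring n)"
  have c: "Pf i (lk P) \<in> carrier (ps_ring n)"
    using Pf_carrier[OF i mpoly_to_ps_carrier[OF P]] by (simp add: mpoly_to_ps_def)
  show ?thesis unfolding mp_carrier
  proof
    fix g assume "g \<in> ks (PT i P)"
    hence "Pf i (lk P) g \<noteq> 0" using i by (simp add: in_keys_iff lookup_PT)
    thus "ks g \<subseteq> {..<n}" using c unfolding ps_carrier by blast
  qed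
qed

lemma PT_add: "i \<in> Iset \<Longrightarrow> PT i (P + Q) = PT i P + PT i Q"
  by (rule poly_mapping_eqI) (auto simp: lookup_PT lookup_add Pf_def Iset_def rep_add)

lemma PT_lin: "i \<in> Iset \<Longrightarrow> PT i (h ^ q * c) = h * PT i c"
proof -
  assume i: "i \<in> Iset"
  have "mpoly_to_ps (PT i (h ^ q * c)) = Pf i (ps_mult (mpoly_to_ps h [^]\<^bsub>ps_ring 0\<^esub> q) (mpoly_to_ps c))"
    using i by (simp add: lookup_PT mpoly_to_ps_def mpoly_to_ps_mult[unfolded mpoly_to_ps_def] ps_pow_lookup)
  also have "\<dots> = ps_mult (mpoly_to_ps h) (Pf i (mpoly_to_ps c))" by (rule Pf_lin[OF i])
  also have "\<dots> = mpoly_to_ps (h * PT i c)" using i by (simp add: PT_C mpoly_to_ps_mult)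
  finally show ?thesis by (rule mpoly_to_ps_inj)
qed

definition mmod :: "mono \<Rightarrow> mono" where "mmod m = Abs_poly_mapping (\<lambda>j. lk m j mod q)"
definition mdiv :: "mono \<Rightarrow> mono" where "mdiv m = Abs_poly_mapping (\<lambda>j. lk m j div q)"

lemma lookup_mmod [simp]: "lk (mmod m) j = lk m j mod q"
proof -
  have "finite {j. lk m j mod q \<noteq> 0}" by (rule finite_subset[of _ "{j. lk m j \<noteq> 0}"]) (auto intro: gr0I)
  thus ?thesis by (simp add: mmod_def)
qed

lemma lookup_mdiv [simp]: "lk (mdiv m) j = lk m j div q"
proof -
  have "finite {j. lk m j div q \<noteq> 0}" by (rule finite_subset[of _ "{j. lk m j \<noteq> 0}"]) (auto intro: gr0I)
  thus ?thesis by (simp add: mdiv_def)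
qed

lemma m_decomp: "m = msc q (mdiv m) + mmod m"
  by (simp add: mono_eq_iff lookup_add)

lemma mmod_unique: "(\<And>j. lk a j < q) \<Longrightarrow> m = msc q g + a \<Longrightarrow> a = mmod m \<and> g = mdiv m"
  using q_pos by (auto simp: mono_eq_iff lookup_add)

lemma lookup_term:
  assumes i: "(b, a) \<in> Iset"
  shows "lk (Poly_Mapping.single a b * PT (b, a) P ^ q) m = (if a = mmod m then b * rep b (lk P m) ^ q else 0)"
proof -
  have a: "\<And>j. lk a j < q" and b: "b \<in> B" using i by (auto simp: Iset_def)
  let ?Q = "PT (b, a) P"
  have lQ: "lk (?Q ^ q) d = (if \<exists>g. d = msc q g then lk ?Q (THE g. d = msc q g) ^ q else 0)" for d
    by (rule lookup_poly_frob[OF pr qdef])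
  have lQ2: "lk (?Q ^ q) (msc q g) = rep b (lk P (msc q g + a)) ^ q" for g
  proof -
    have "(THE g'. msc q g = msc q g') = g" using msc_inj[OF q_pos] by blast
    thus ?thesis using lQ[of "msc q g"] i by (auto simp: lookup_PT Pf_def)
  qed
  have "lk (Poly_Mapping.single a b * ?Q ^ q) m = (\<Sum>x\<in>pairs m. (if fst x = a then b else 0) * lk (?Q ^ q) (snd x))"
    by (simp add: lookup_mult_pairs lookup_single when_def split_def eq_commute)
  also have "\<dots> = (if a = mmod m then b * rep b (lk P m) ^ q else 0)"
  proof (cases "a = mmod m")
    case True
    let ?x = "(a, msc q (mdiv m))"
    have x: "?x \<in> pairs m" using m_decomp[of m] True by (simp add: pairs_def add.commute)
    have "(\<Sum>x\<in>pairs m. (if fst x = a then b else 0) * lk (?Q ^ q) (snd x)) =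
          (\<Sum>x\<in>{?x}. (if fst x = a then b else 0) * lk (?Q ^ q) (snd x))"
    proof (rule sum.mono_neutral_right[OF finite_pairs])
      show "{?x} \<subseteq> pairs m" using x by simp
      show "\<forall>y\<in>pairs m - {?x}. (if fst y = a then b else 0) * lk (?Q ^ q) (snd y) = 0"
      proof
        fix y assume y: "y \<in> pairs m - {?x}"
        show "(if fst y = a then b else 0) * lk (?Q ^ q) (snd y) = 0"
        proof (cases "fst y = a")
          case True
          have "fst y + snd y = m" using y by (auto simp: pairs_def)
          hence "snd y = msc q (mdiv m)" using x True by (auto simp: pairs_def intro: mono_add_cancel)
          with True y have False by (cases y) auto
          thus ?thesis ..
        qed simp
      qed
    qed
    also have "\<dots> = b * rep b (lk P m) ^ q"
      using lQ2[of "mdiv m"] m_decomp[of m] True by simp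
    finally show ?thesis using True by simp
  next
    case False
    have "(if fst y = a then b else 0) * lk (?Q ^ q) (snd y) = 0" if y: "y \<in> pairs m" for y
    proof (cases "fst y = a \<and> (\<exists>g. snd y = msc q g)")
      case True
      then obtain g where g: "fst y = a" "snd y = msc q g" by blast
      have "m = msc q g + a" using y g by (cases y) (auto simp: pairs_def add.commute)
      hence "a = mmod m" using mmod_unique[OF a] by blast
      thus ?thesis using False by simp
    next
      case False thus ?thesis using lQ[of "snd y"] by auto
    qed
    thus ?thesis using False by (auto intro!: sum.neutral)
  qed
  finally show ?thesis .
qed

lemma sum_in_ideal:
  assumes J: "ideal J (mpoly_ring n)" and f: "\<And>x. x \<in> S \<Longrightarrow> f x \<in> J"
  shows "sum f S \<in> J"
  using f
proof (induction S rule: infinite_finite_induct)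
  have z: "\<zero>\<^bsub>mpoly_ring n\<^esub> \<in> J" by (rule additive_subgroup.zero_closed[OF ideal.axioms(1)[OF J]])
  case (infinite A) thus ?case using z by simp
next
  have z: "\<zero>\<^bsub>mpoly_ring n\<^esub> \<in> J" by (rule additive_subgroup.zero_closed[OF ideal.axioms(1)[OF J]])
  case empty thus ?case using z by simp
next
  case (insert x F)
  have "f x \<oplus>\<^bsub>mpoly_ring n\<^esub> sum f F \<in> J"
    using insert by (intro additive_subgroup.a_closed[OF ideal.axioms(1)[OF J]]) auto
  hence "f x + sum f F \<in> J" by simp
  thus ?case using insert by simp
qed

lemma R2:
  assumes P: "P \<in> carrier (mpoly_ring n)"
  shows "P \<in> frob_bracket (mpoly_ring n) q ((\<lambda>i. PT i P) ` Iset)"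
proof -
  let ?J = "frob_bracket (mpoly_ring n) q ((\<lambda>i. PT i P) ` Iset)"
  have J: "ideal ?J (mpoly_ring n)"
    by (rule frob_bracket_ideal[OF cring.axioms(1)[OF mp_cring]]) (use PT_carrier P in auto)
  obtain B0 where B0: "B0 \<subseteq> B" "finite B0" "\<forall>v\<in>lk P ` ks P. v = (\<Sum>b\<in>B0. rep b v ^ q * b)"
    using rep_span[of "lk P ` ks P"] by auto
  define Al where "Al = mmod ` ks P"
  have Alf: "finite Al" unfolding Al_def by simp
  have I0: "B0 \<times> Al \<subseteq> Iset" using B0 q_pos unfolding Al_def Iset_def by auto
  let ?t = "\<lambda>x. Poly_Mapping.single (snd x) (fst x) * PT x P ^ q"
  have eq: "P = (\<Sum>x\<in>B0 \<times> Al. ?t x)"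
  proof (rule poly_mapping_eqI)
    fix m
    have "lk (\<Sum>x\<in>B0 \<times> Al. ?t x) m = (\<Sum>x\<in>B0 \<times> Al. if snd x = mmod m then fst x * rep (fst x) (lk P m) ^ q else 0)"
      unfolding lookup_sum using I0 by (intro sum.cong) (auto simp: lookup_term)
    also have "\<dots> = (\<Sum>b\<in>B0. \<Sum>a\<in>Al. if a = mmod m then b * rep b (lk P m) ^ q else 0)"
      by (simp add: sum.cartesian_product split_def)
    also have "\<dots> = (if mmod m \<in> Al then (\<Sum>b\<in>B0. rep b (lk P m) ^ q * b) else 0)"
      using Alf by (simp add: sum.delta' mult.commute)
    also have "\<dots> = lk P m"
    proof (cases "m \<in> ks P")
      case True thus ?thesis using B0(3) unfolding Al_def by auto
    next
      case False
      hence "lk P m = 0" by (simp add: in_keys_iff)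
      thus ?thesis using B0 q_pos by (auto simp: rep_zero intro!: sum.neutral)
    qed
    finally show "lk P m = lk (\<Sum>x\<in>B0 \<times> Al. ?t x) m" by simp
  qed
  have "?t x \<in> ?J" if x: "x \<in> B0 \<times> Al" for x
  proof -
    obtain b a where ba: "x = (b, a)" "b \<in> B0" "a \<in> Al" using x by auto
    obtain m where m: "m \<in> ks P" "a = mmod m" using ba unfolding Al_def by auto
    have "ks a \<subseteq> ks m" using m by (auto simp: in_keys_iff dest: mod_pos_imp)
    hence sc: "Poly_Mapping.single a b \<in> carrier (mpoly_ring n)"
      using P m unfolding mp_carrier by auto
    have "PT x P [^]\<^bsub>mpoly_ring n\<^esub> q \<in> ?J"
      unfolding frob_bracket_def
      by (rule ring.genideal_self[OF cring.axioms(1)[OF mp_cring], THEN subsetD])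
         (use x I0 P in \<open>auto intro!: mp_pow_closed PT_carrier\<close>)
    hence "PT x P ^ q \<in> ?J" by simp
    hence "Poly_Mapping.single a b \<otimes>\<^bsub>mpoly_ring n\<^esub> PT x P ^ q \<in> ?J"
      by (rule ideal.I_l_closed[OF J]) (rule sc)
    thus ?thesis using ba by simp
  qed
  hence "(\<Sum>x\<in>B0 \<times> Al. ?t x) \<in> ?J" by (rule sum_in_ideal[OF J])
  thus ?thesis using eq by simp
qed

end

lemma frob_setup_exists:
  assumes pr: "Factorial_Ring.prime CHAR('k::field)"
  shows "\<exists>B (rep :: 'k \<Rightarrow> 'k \<Rightarrow> 'k). frob_setup (CHAR('k) ^ e) B rep e"
proof -
  define q where "q = CHAR('k) ^ e"
  define sc :: "'k \<Rightarrow> 'k \<Rightarrow> 'k" where "sc = (\<lambda>c v. c ^ q * v)"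
  interpret vs: vector_space sc
  proof (unfold_locales)
    fix a b x y :: 'k
    show "sc a (x + y) = sc a x + sc a y" by (simp add: sc_def distrib_left)
    show "sc (a + b) x = sc a x + sc b x"
      by (simp add: sc_def freshmans_dream'[OF pr q_def] distrib_right)
    show "sc a (sc b x) = sc (a * b) x" by (simp add: sc_def power_mult_distrib)
    show "sc 1 x = x" by (simp add: sc_def)
  qed
  obtain B where B: "vs.independent B" "UNIV \<subseteq> vs.span B"
    using vs.basis_exists[of UNIV] by blast
  define rep where "rep b v = vs.representation B v b" for b v
  have sp: "v \<in> vs.span B" for v using B by auto
  have "frob_setup q B rep e"
  proof (unfold_locales)
    show "Factorial_Ring.prime CHAR('k)" by (rule pr)
    show "q = CHAR('k) ^ e" by (rule q_def)
    fix b x y c v :: 'k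
    show "rep b (x + y) = rep b x + rep b y"
      unfolding rep_def using vs.representation_add[OF B(1) sp sp] by simp
    show "rep b (c ^ q * v) = c * rep b v"
      unfolding rep_def using vs.representation_scale[OF B(1) sp, of c v] by (simp add: sc_def)
  next
    fix V :: "'k set" assume V: "finite V"
    define B0 where "B0 = (\<Union>v\<in>V. {b. rep b v \<noteq> 0})"
    have "finite B0" unfolding B0_def rep_def using V vs.finite_representation by auto
    moreover have "B0 \<subseteq> B" unfolding B0_def rep_def using vs.representation_ne_zero by auto
    moreover have "\<forall>v\<in>V. v = (\<Sum>b\<in>B0. rep b v ^ q * b)"
    proof
      fix v assume v: "v \<in> V"
      have "v = (\<Sum>b | rep b v \<noteq> 0. sc (rep b v) b)"
        unfolding rep_def using vs.sum_nonzero_representation_eq[OF B(1) sp] by simp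
      also have "\<dots> = (\<Sum>b\<in>B0. sc (rep b v) b)"
        by (rule sum.mono_neutral_left) (use \<open>finite B0\<close> v q_def pr prime_gt_0_nat in \<open>auto simp: B0_def sc_def\<close>)
      finally show "v = (\<Sum>b\<in>B0. rep b v ^ q * b)" by (simp add: sc_def)
    qed
    ultimately show "\<exists>B0\<subseteq>B. finite B0 \<and> (\<forall>v\<in>V. v = (\<Sum>b\<in>B0. rep b v ^ q * b))" by blast
  qed
  thus ?thesis unfolding q_def by blast
qed

theorem mainTheorem10:
  fixes p n e :: nat and A :: "((nat \<Rightarrow>\<^sub>0 nat) \<Rightarrow>\<^sub>0 'k::field) set"
  assumes "Factorial_Ring.prime p" and "CHAR('k) = p" and "e \<ge> 1"
    and "ideal A (mpoly_ring n)"
  shows "(\<forall>W. multiplicative_set (mpoly_ring n) W \<longrightarrow>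
            ideal_tilde (loc (mpoly_ring n) W) p e (ext_ideal (loc (mpoly_ring n) W) (loc_map (mpoly_ring n) W) A)
            = ext_ideal (loc (mpoly_ring n) W) (loc_map (mpoly_ring n) W) (ideal_tilde (mpoly_ring n) p e A))
       \<and> ideal_tilde (ps_ring n) p e (ext_ideal (ps_ring n) mpoly_to_ps A)
            = ext_ideal (ps_ring n) mpoly_to_ps (ideal_tilde (mpoly_ring n) p e A)"
proof -
  have pr: "Factorial_Ring.prime CHAR('k)" using assms by simp
  obtain B and rep :: "'k \<Rightarrow> 'k \<Rightarrow> 'k" where fs0: "frob_setup (p ^ e) B rep e"
    using frob_setup_exists[OF pr, of e] assms(2) by auto
  interpret fs: frob_setup "p ^ e" B rep e by (rule fs0)
  have q: "0 < p ^ e" by (rule fs.q_pos)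
  have T: "cring (mpoly_ring n :: ((nat \<Rightarrow>\<^sub>0 nat) \<Rightarrow>\<^sub>0 'k) ring)" by (rule mp_cring)
  have Ac: "A \<subseteq> carrier (mpoly_ring n)"
    using assms(4) by (simp add: ideal.axioms(1) additive_subgroup.a_subset)
  have part2: "ideal_tilde (ps_ring n) p e (ext_ideal (ps_ring n) mpoly_to_ps A)
            = ext_ideal (ps_ring n) mpoly_to_ps (ideal_tilde (mpoly_ring n) p e A)"
  proof (rule tilde_transfer[OF T ps_cring mpoly_to_ps_hom Ac q, where I = fs.Iset and \<pi> = fs.PT and \<pi>' = fs.Pf])
    fix i x y h c x2 y2 h2 c2
    assume i: "i \<in> fs.Iset"
    show "x \<in> carrier (mpoly_ring n) \<Longrightarrow> fs.PT i x \<in> carrier (mpoly_ring n)" by (rule fs.PT_carrier[OF i])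
    show "x \<in> carrier (mpoly_ring n) \<Longrightarrow> y \<in> carrier (mpoly_ring n) \<Longrightarrow>
        fs.PT i (x \<oplus>\<^bsub>mpoly_ring n\<^esub> y) = fs.PT i x \<oplus>\<^bsub>mpoly_ring n\<^esub> fs.PT i y"
      using fs.PT_add[OF i] by simp
    show "h \<in> carrier (mpoly_ring n) \<Longrightarrow> c \<in> carrier (mpoly_ring n) \<Longrightarrow>
        fs.PT i (h [^]\<^bsub>mpoly_ring n\<^esub> p ^ e \<otimes>\<^bsub>mpoly_ring n\<^esub> c) = h \<otimes>\<^bsub>mpoly_ring n\<^esub> fs.PT i c"
      using fs.PT_lin[OF i] by simp
    show "x2 \<in> carrier (ps_ring n) \<Longrightarrow> fs.Pf i x2 \<in> carrier (ps_ring n)" by (rule fs.Pf_carrier[OF i])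
    show "x2 \<in> carrier (ps_ring n) \<Longrightarrow> y2 \<in> carrier (ps_ring n) \<Longrightarrow>
        fs.Pf i (x2 \<oplus>\<^bsub>ps_ring n\<^esub> y2) = fs.Pf i x2 \<oplus>\<^bsub>ps_ring n\<^esub> fs.Pf i y2"
      using fs.Pf_add[OF i] by simp
    show "h2 \<in> carrier (ps_ring n) \<Longrightarrow> c2 \<in> carrier (ps_ring n) \<Longrightarrow>
        fs.Pf i (h2 [^]\<^bsub>ps_ring n\<^esub> p ^ e \<otimes>\<^bsub>ps_ring n\<^esub> c2) = h2 \<otimes>\<^bsub>ps_ring n\<^esub> fs.Pf i c2"
      using fs.Pf_lin[OF i] by simp
    show "x \<in> carrier (mpoly_ring n) \<Longrightarrow> fs.Pf i (mpoly_to_ps x) = mpoly_to_ps (fs.PT i x)"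
      by (rule fs.PT_C[OF i])
  next
    fix a :: "(nat \<Rightarrow>\<^sub>0 nat) \<Rightarrow>\<^sub>0 'k" assume "a \<in> carrier (mpoly_ring n)"
    thus "a \<in> frob_bracket (mpoly_ring n) (p ^ e) ((\<lambda>i. fs.PT i a) ` fs.Iset)" by (rule fs.R2)
  qed
  have part1: "ideal_tilde (loc (mpoly_ring n) W) p e (ext_ideal (loc (mpoly_ring n) W) (loc_map (mpoly_ring n) W) A)
            = ext_ideal (loc (mpoly_ring n) W) (loc_map (mpoly_ring n) W) (ideal_tilde (mpoly_ring n) p e A)"
    if W: "multiplicative_set (mpoly_ring n) W" for W
  proof -
    interpret lw: locW "mpoly_ring n" W by (rule locW.intro[OF T]) (rule locW_axioms.intro[OF W])
    have qs: "Suc (p ^ e - 1) = p ^ e" using q by simp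
    have ls: "locW_split (mpoly_ring n) W (fs.PT i) (p ^ e - 1)" if i: "i \<in> fs.Iset" for i
    proof (rule locW_split.intro[OF lw.locW_axioms], unfold_locales)
      fix x y h c
      show "x \<in> carrier (mpoly_ring n) \<Longrightarrow> fs.PT i x \<in> carrier (mpoly_ring n)" by (rule fs.PT_carrier[OF i])
      show "x \<in> carrier (mpoly_ring n) \<Longrightarrow> y \<in> carrier (mpoly_ring n) \<Longrightarrow>
        fs.PT i (x \<oplus>\<^bsub>mpoly_ring n\<^esub> y) = fs.PT i x \<oplus>\<^bsub>mpoly_ring n\<^esub> fs.PT i y"
        using fs.PT_add[OF i] by simp
      show "h \<in> carrier (mpoly_ring n) \<Longrightarrow> c \<in> carrier (mpoly_ring n) \<Longrightarrow>
        fs.PT i (h [^]\<^bsub>mpoly_ring n\<^esub> Suc (p ^ e - 1) \<otimes>\<^bsub>mpoly_ring n\<^esub> c) = h \<otimes>\<^bsub>mpoly_ring n\<^esub> fs.PT i c"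
        using fs.PT_lin[OF i] by (simp only: qs mp_pow mp_ops)
    qed
    show ?thesis
    proof (rule tilde_transfer[OF T lw.loc_cring lw.loc_map_hom Ac q, where I = fs.Iset and \<pi> = fs.PT
          and \<pi>' = "\<lambda>i. locW_split.pil (mpoly_ring n) W (fs.PT i) (p ^ e - 1)"])
      fix i x y h c x2 y2 h2 c2
      assume i: "i \<in> fs.Iset"
      interpret ls: locW_split "mpoly_ring n" W "fs.PT i" "p ^ e - 1" by (rule ls[OF i])
      show "x \<in> carrier (mpoly_ring n) \<Longrightarrow> fs.PT i x \<in> carrier (mpoly_ring n)" by (rule fs.PT_carrier[OF i])
      show "x \<in> carrier (mpoly_ring n) \<Longrightarrow> y \<in> carrier (mpoly_ring n) \<Longrightarrow>
          fs.PT i (x \<oplus>\<^bsub>mpoly_ring n\<^esub> y) = fs.PT i x \<oplus>\<^bsub>mpoly_ring n\<^esub> fs.PT i y"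
        using fs.PT_add[OF i] by simp
      show "h \<in> carrier (mpoly_ring n) \<Longrightarrow> c \<in> carrier (mpoly_ring n) \<Longrightarrow>
          fs.PT i (h [^]\<^bsub>mpoly_ring n\<^esub> p ^ e \<otimes>\<^bsub>mpoly_ring n\<^esub> c) = h \<otimes>\<^bsub>mpoly_ring n\<^esub> fs.PT i c"
        using fs.PT_lin[OF i] by simp
      show "x2 \<in> carrier (loc (mpoly_ring n) W) \<Longrightarrow> ls.pil x2 \<in> carrier (loc (mpoly_ring n) W)"
        by (rule ls.pil_closed)
      show "x2 \<in> carrier (loc (mpoly_ring n) W) \<Longrightarrow> y2 \<in> carrier (loc (mpoly_ring n) W) \<Longrightarrow>
          ls.pil (x2 \<oplus>\<^bsub>loc (mpoly_ring n) W\<^esub> y2) = ls.pil x2 \<oplus>\<^bsub>loc (mpoly_ring n) W\<^esub> ls.pil y2"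
        by (rule ls.pil_add)
      show "h2 \<in> carrier (loc (mpoly_ring n) W) \<Longrightarrow> c2 \<in> carrier (loc (mpoly_ring n) W) \<Longrightarrow>
          ls.pil (h2 [^]\<^bsub>loc (mpoly_ring n) W\<^esub> p ^ e \<otimes>\<^bsub>loc (mpoly_ring n) W\<^esub> c2) = h2 \<otimes>\<^bsub>loc (mpoly_ring n) W\<^esub> ls.pil c2"
        using ls.pil_lin[of h2 c2] by (simp only: qs)
      show "x \<in> carrier (mpoly_ring n) \<Longrightarrow> ls.pil (loc_map (mpoly_ring n) W x) = loc_map (mpoly_ring n) W (fs.PT i x)"
        by (rule ls.pil_map)
    next
      fix a :: "(nat \<Rightarrow>\<^sub>0 nat) \<Rightarrow>\<^sub>0 'k" assume "a \<in> carrier (mpoly_ring n)"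
      thus "a \<in> frob_bracket (mpoly_ring n) (p ^ e) ((\<lambda>i. fs.PT i a) ` fs.Iset)" by (rule fs.R2)
    qed
  qed
  show ?thesis using part1 part2 by blast
qed

end
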